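(* For $\kappa>0$ let $\mathbb{P}_\kappa$ be the law of the Ornstein–Uhlenbeck process $B$ in $\mathbb{R}^\ell$ started at $0$ with generator $\frac12\Delta-\kappa x\cdot\nabla$. Then for every $N>0$, $$\limsup_{t\to\infty}\frac1t\log\mathbb{P}_\kappa\Big(\frac1t\int_0^t|B(s)|ds>N\Big)\le-N+\frac1{2\kappa^2}+\frac\ell2\kappa .$$
   Context: $|\cdot|$ is the Euclidean norm on $\mathbb{R}^\ell$. *)

theory Defs
  imports "HOL-Probability.Probability"
begin

text \<open>Covariance of each coordinate of the Ornstein-Uhlenbeck process started at 0
  with generator (1/2) Laplacian - kappa x . grad, i.e. dB = dW - kappa B dt.\<close>
definition OU_cov :: "real \<Rightarrow> real \<Rightarrow> real \<Rightarrow> real" where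
  "OU_cov \<kappa> s u = (exp (- \<kappa> * \<bar>s - u\<bar>) - exp (- \<kappa> * (s + u))) / (2 * \<kappa>)"

definition centered_gaussian_rv :: "'a measure \<Rightarrow> ('a \<Rightarrow> real) \<Rightarrow> real \<Rightarrow> bool" where
  "centered_gaussian_rv M X v \<longleftrightarrow>
     (v = 0 \<and> X \<in> borel_measurable M \<and> (AE \<omega> in M. X \<omega> = 0)) \<or>
     (v > 0 \<and> distributed M lborel X (normal_density 0 (sqrt v)))"

text \<open>B is (a version with continuous paths of) the Ornstein-Uhlenbeck process in
  R^CARD('n) started at 0: a centered Gaussian process with continuous paths,
  independent coordinates, and covariance OU_cov.\<close>
definition OU_process :: "'a measure \<Rightarrow> real \<Rightarrow> ('a \<Rightarrow> real \<Rightarrow> real ^ 'n) \<Rightarrow> bool" where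
  "OU_process M \<kappa> B \<longleftrightarrow>
     prob_space M \<and>
     (\<forall>\<omega>\<in>space M. continuous_on {0..} (B \<omega>)) \<and>
     (\<forall>(n::nat) (s::nat \<Rightarrow> real) (i::nat \<Rightarrow> 'n) (c::nat \<Rightarrow> real).
        (\<forall>k<n. s k \<ge> 0) \<longrightarrow>
        centered_gaussian_rv M (\<lambda>\<omega>. \<Sum>k<n. c k * (B \<omega> (s k) $ i k))
          (\<Sum>k<n. \<Sum>m<n. c k * c m * (if i k = i m then OU_cov \<kappa> (s k) (s m) else 0)))"

definition elog :: "real \<Rightarrow> ereal" where
  "elog p = (if p \<le> 0 then -\<infinity> else ereal (ln p))"

end

theory Submission
  imports Defs
begin

lemma gauss_nn:
  fixes q b :: real assumes q: "q > 0"
  shows "(\<integral>\<^sup>+x. ennreal (exp (- q * x\<^sup>2 / 2 + b * x)) \<partial>lborel) = ennreal (sqrt (2 * pi / q) * exp (b\<^sup>2 / (2 * q)))"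
proof -
  define \<sigma> where "\<sigma> = 1 / sqrt q"
  have s: "\<sigma> > 0" using q by (simp add: \<sigma>_def)
  have s2: "\<sigma>\<^sup>2 = 1 / q" using q by (simp add: \<sigma>_def power_divide)
  have eq: "exp (- q * x\<^sup>2 / 2 + b * x) = sqrt (2 * pi / q) * exp (b\<^sup>2 / (2 * q)) * normal_density (b / q) \<sigma> x" for x
  proof -
    have nd: "normal_density (b/q) \<sigma> x = 1/sqrt(2*pi/q) * exp(-(x-b/q)\<^sup>2/(2*(1/q)))"
      by (simp add: normal_density_def s2)
    have e: "- q * x\<^sup>2 / 2 + b * x = b\<^sup>2 / (2 * q) + (-(x - b/q)\<^sup>2 / (2 * (1/q)))"
      using q by (simp add: field_simps power2_eq_square)
    have p: "sqrt (2 * pi / q) > 0" using q by simp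
    show ?thesis unfolding nd e exp_add using p q by simp
  qed
  have "(\<integral>\<^sup>+x. ennreal (exp (- q * x\<^sup>2 / 2 + b * x)) \<partial>lborel)
      = (\<integral>\<^sup>+x. ennreal (sqrt (2 * pi / q) * exp (b\<^sup>2 / (2 * q))) * ennreal (normal_density (b / q) \<sigma> x) \<partial>lborel)"
    by (intro nn_integral_cong, subst eq, subst ennreal_mult) (use q in auto)
  also have "\<dots> = ennreal (sqrt (2 * pi / q) * exp (b\<^sup>2 / (2 * q))) * (\<integral>\<^sup>+x. ennreal (normal_density (b / q) \<sigma> x) \<partial>lborel)"
    by (simp add: nn_integral_cmult)
  also have "(\<integral>\<^sup>+x. ennreal (normal_density (b / q) \<sigma> x) \<partial>lborel) = 1"
    using s by (subst nn_integral_eq_integral) auto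
  finally show ?thesis by simp
qed

definition stdN :: "real measure" where "stdN = density lborel std_normal_density"

lemma prob_space_stdN: "prob_space stdN"
  unfolding stdN_def using prob_space_normal_density[of 1 0] by simp

lemma ennreal_mult_eq:
  fixes a b c d :: real
  assumes "0 \<le> a" "0 \<le> b" "0 \<le> c" "0 \<le> d" "a * b = c * d"
  shows "ennreal a * ennreal b = ennreal c * ennreal d"
  using assms by (simp add: ennreal_mult[symmetric])

lemma space_stdN[simp]: "space stdN = UNIV" and sets_stdN[simp]: "sets stdN = sets borel"
  by (auto simp: stdN_def)

lemma measurable_stdN_iff[simp]: "measurable stdN N = measurable borel N"
  by (simp add: stdN_def measurable_def)

lemma gauss_quad:
  fixes A B :: real assumes A: "A < 1/2"
  shows "(\<integral>\<^sup>+z. ennreal (exp (A * z\<^sup>2 + B * z)) \<partial>stdN) = ennreal (exp (B\<^sup>2 / (2 * (1 - 2*A))) / sqrt (1 - 2*A))"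
proof -
  define q where "q = 1 - 2 * A"
  have q: "q > 0" using A by (simp add: q_def)
  have "(\<integral>\<^sup>+z. ennreal (exp (A * z\<^sup>2 + B * z)) \<partial>stdN)
     = (\<integral>\<^sup>+z. ennreal (std_normal_density z) * ennreal (exp (A * z\<^sup>2 + B * z)) \<partial>lborel)"
    unfolding stdN_def by (subst nn_integral_density) auto
  also have "\<dots> = (\<integral>\<^sup>+z. ennreal (1 / sqrt (2*pi)) * ennreal (exp (- q * z\<^sup>2 / 2 + B * z)) \<partial>lborel)"
  proof (intro nn_integral_cong)
    fix z :: real
    have "std_normal_density z * exp (A * z\<^sup>2 + B * z) = (1 / sqrt (2*pi)) * exp (- q * z\<^sup>2 / 2 + B * z)"
      unfolding std_normal_density_def q_def mult.assoc exp_add[symmetric]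
      by (simp add: field_simps)
    then show "ennreal (std_normal_density z) * ennreal (exp (A * z\<^sup>2 + B * z)) = ennreal (1 / sqrt (2*pi)) * ennreal (exp (- q * z\<^sup>2 / 2 + B * z))"
      by (intro ennreal_mult_eq) auto
  qed
  also have "\<dots> = ennreal (1 / sqrt (2*pi)) * ennreal (sqrt (2 * pi / q) * exp (B\<^sup>2 / (2 * q)))"
    using gauss_nn[OF q, of B] by (subst nn_integral_cmult) auto
  also have "\<dots> = ennreal (exp (B\<^sup>2 / (2 * q)) / sqrt q)"
    using q by (simp add: ennreal_mult[symmetric] real_sqrt_divide field_simps)
  finally show ?thesis by (simp add: q_def)
qed

lemma hs_identity:
  fixes c :: real
  shows "(\<integral>\<^sup>+z. ennreal (exp (c * z)) \<partial>stdN) = ennreal (exp (c\<^sup>2 / 2))"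
  using gauss_quad[of 0 c] by simp

lemma gauss_shift:
  fixes gm v :: real assumes "gm < 1/2"
  shows "(\<integral>\<^sup>+z. ennreal (exp (gm * (z + v)\<^sup>2)) \<partial>stdN) = ennreal (exp (gm * v\<^sup>2 / (1 - 2*gm)) / sqrt (1 - 2*gm))"
proof -
  have "(\<integral>\<^sup>+z. ennreal (exp (gm * (z + v)\<^sup>2)) \<partial>stdN) = (\<integral>\<^sup>+z. ennreal (exp (gm * v\<^sup>2)) * ennreal (exp (gm * z\<^sup>2 + 2 * gm * v * z)) \<partial>stdN)"
  proof (intro nn_integral_cong)
    fix z :: real
    have "gm * (z + v)\<^sup>2 = gm * v\<^sup>2 + (gm * z\<^sup>2 + 2 * gm * v * z)"
      by (simp add: power2_eq_square algebra_simps)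
    then show "ennreal (exp (gm * (z + v)\<^sup>2)) = ennreal (exp (gm * v\<^sup>2)) * ennreal (exp (gm * z\<^sup>2 + 2 * gm * v * z))"
      by (simp add: exp_add ennreal_mult)
  qed
  also have "\<dots> = ennreal (exp (gm * v\<^sup>2)) * ennreal (exp ((2 * gm * v)\<^sup>2 / (2 * (1 - 2*gm))) / sqrt (1 - 2*gm))"
    using assms by (simp add: nn_integral_cmult gauss_quad)
  also have "\<dots> = ennreal (exp (gm * v\<^sup>2 / (1 - 2*gm)) / sqrt (1 - 2*gm))"
  proof -
    have "gm * v\<^sup>2 + (2 * gm * v)\<^sup>2 / (2 * (1 - 2*gm)) = gm * v\<^sup>2 / (1 - 2*gm)"
      using assms by (simp add: field_simps power2_eq_square)
    then have "exp (gm * v\<^sup>2) * (exp ((2 * gm * v)\<^sup>2 / (2 * (1 - 2*gm))) / sqrt (1 - 2*gm)) = exp (gm * v\<^sup>2 / (1 - 2*gm)) / sqrt (1 - 2*gm)"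
      by (metis exp_add times_divide_eq_right)
    then show ?thesis
      using assms by (subst ennreal_mult[symmetric]) auto
  qed
  finally show ?thesis .
qed

lemma gaussian_mgf:
  assumes "prob_space M" "centered_gaussian_rv M X v"
  shows "(\<integral>\<^sup>+\<omega>. ennreal (exp (X \<omega>)) \<partial>M) = ennreal (exp (v / 2))"
  using assms(2) unfolding centered_gaussian_rv_def
proof (elim disjE conjE)
  assume v: "v = 0" and ae: "AE \<omega> in M. X \<omega> = 0"
  have "(\<integral>\<^sup>+\<omega>. ennreal (exp (X \<omega>)) \<partial>M) = (\<integral>\<^sup>+\<omega>. 1 \<partial>M)"
    by (rule nn_integral_cong_AE) (use ae in auto)
  also have "\<dots> = 1" using prob_space.emeasure_space_1[OF assms(1)] by simp
  finally show ?thesis using v by simp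
next
  assume v: "v > 0" and d: "distributed M lborel X (normal_density 0 (sqrt v))"
  have "(\<integral>\<^sup>+\<omega>. ennreal (exp (X \<omega>)) \<partial>M) = (\<integral>\<^sup>+x. ennreal (normal_density 0 (sqrt v) x) * ennreal (exp x) \<partial>lborel)"
    by (subst distributed_nn_integral[OF d, symmetric]) auto
  also have "\<dots> = (\<integral>\<^sup>+x. ennreal (1 / sqrt (2 * pi * v)) * ennreal (exp (- (1/v) * x\<^sup>2 / 2 + 1 * x)) \<partial>lborel)"
  proof (intro nn_integral_cong)
    fix x :: real
    have "normal_density 0 (sqrt v) x * exp x = 1 / sqrt (2 * pi * v) * exp (- (1/v) * x\<^sup>2 / 2 + 1 * x)"
      using v by (simp add: normal_density_def exp_add[symmetric] field_simps)
    then show "ennreal (normal_density 0 (sqrt v) x) * ennreal (exp x) = ennreal (1 / sqrt (2 * pi * v)) * ennreal (exp (- (1/v) * x\<^sup>2 / 2 + 1 * x))"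
      using v by (intro ennreal_mult_eq) auto
  qed
  also have "\<dots> = ennreal (1 / sqrt (2 * pi * v)) * ennreal (sqrt (2 * pi / (1/v)) * exp (1\<^sup>2 / (2 * (1/v))))"
    using v gauss_nn[of "1/v" 1] by (subst nn_integral_cmult) auto
  also have "\<dots> = ennreal (exp (v / 2))"
  proof -
    have "1 / sqrt (2 * pi * v) * (sqrt (2 * pi / (1/v)) * exp (1\<^sup>2 / (2 * (1/v)))) = exp (v / 2)"
      using v by simp
    then show ?thesis using v by (subst ennreal_mult[symmetric]) auto
  qed
  finally show ?thesis .
qed

lemma ennreal_mult_le:
  fixes a b c :: real
  assumes "0 \<le> a" "0 \<le> b" "a * b \<le> c"
  shows "ennreal a * ennreal b \<le> ennreal c"
  using assms ennreal_leI ennreal_mult by metis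

definition U :: "real \<Rightarrow> (nat \<Rightarrow> real) \<Rightarrow> nat \<Rightarrow> real" where
  "U \<rho> z r = (\<Sum>p\<le>r. \<rho> ^ (r - p) * z p)"

lemma U_Suc: "U \<rho> z (Suc r) = z (Suc r) + \<rho> * U \<rho> z r"
  unfolding U_def by (simp add: sum_distrib_left Suc_diff_le mult.assoc[symmetric])

lemma U_upd: "r \<le> n \<Longrightarrow> U \<rho> (z(Suc n := y)) r = U \<rho> z r"
  unfolding U_def by (intro sum.cong) auto

lemma measurable_to_stdN[simp]: "measurable N stdN = measurable N borel"
  by (rule measurable_cong_sets) auto

interpretation stdN_prod: product_sigma_finite "\<lambda>_::nat. stdN"
  by (simp add: product_sigma_finite_def prob_space_imp_sigma_finite prob_space_stdN)

lemma U_meas[measurable]: "r \<le> n \<Longrightarrow> (\<lambda>z. U \<rho> z r) \<in> borel_measurable (PiM {..n} (\<lambda>_. stdN))"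
  unfolding U_def
proof (intro borel_measurable_sum borel_measurable_times borel_measurable_const)
  fix p assume "r \<le> n" "p \<in> {..r}"
  then have "p \<in> {..n}" by auto
  then show "(\<lambda>z. z p) \<in> borel_measurable (PiM {..n} (\<lambda>_. stdN))"
    using measurable_component_singleton[of p "{..n}" "\<lambda>_. stdN"] by simp
qed

lemma ar_bound:
  fixes \<beta> \<beta>b \<rho> :: real
  assumes b0: "0 \<le> \<beta>" and bb: "2 * \<beta>b < 1" and sup: "\<beta> + \<rho>\<^sup>2 * \<beta>b / (1 - 2 * \<beta>b) \<le> \<beta>b"
  shows "0 \<le> \<gamma> \<Longrightarrow> \<gamma> \<le> \<beta>b \<Longrightarrow>
    (\<integral>\<^sup>+z. ennreal (exp (\<beta> * (\<Sum>r<n. (U \<rho> z r)\<^sup>2) + \<gamma> * (U \<rho> z n)\<^sup>2)) \<partial>PiM {..n} (\<lambda>_. stdN))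
     \<le> ennreal ((1 - 2 * \<beta>b) powr (- (real n + 1) / 2))"
proof (induction n arbitrary: \<gamma>)
  case 0
  have g: "\<gamma> < 1/2" using 0 bb by simp
  have "(\<integral>\<^sup>+z. ennreal (exp (\<beta> * (\<Sum>r<0. (U \<rho> z r)\<^sup>2) + \<gamma> * (U \<rho> z 0)\<^sup>2)) \<partial>PiM {..0} (\<lambda>_. stdN))
      = (\<integral>\<^sup>+z. ennreal (exp (\<gamma> * (z (0::nat))\<^sup>2)) \<partial>PiM {0} (\<lambda>_. stdN))"
    by (simp add: U_def)
  also have "\<dots> = (\<integral>\<^sup>+x. ennreal (exp (\<gamma> * (x + 0)\<^sup>2)) \<partial>stdN)"
    by (subst stdN_prod.product_nn_integral_singleton) auto
  also have "\<dots> = ennreal (1 / sqrt (1 - 2 * \<gamma>))"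
    using gauss_shift[OF g, of 0] by simp
  also have "\<dots> \<le> ennreal ((1 - 2 * \<beta>b) powr (- (real 0 + 1) / 2))"
  proof (rule ennreal_leI)
    have "1 / sqrt (1 - 2 * \<gamma>) \<le> 1 / sqrt (1 - 2 * \<beta>b)"
      using 0 bb by (intro divide_left_mono) auto
    also have "\<dots> = (1 - 2 * \<beta>b) powr (- (real 0 + 1) / 2)"
      using bb by (simp add: powr_minus_divide powr_half_sqrt)
    finally show "1 / sqrt (1 - 2 * \<gamma>) \<le> (1 - 2 * \<beta>b) powr (- (real 0 + 1) / 2)" .
  qed
  finally show ?case .
next
  case (Suc n)
  have g: "\<gamma> < 1/2" using Suc.prems bb by simp
  define \<gamma>' where "\<gamma>' = \<beta> + \<gamma> * \<rho>\<^sup>2 / (1 - 2 * \<gamma>)"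
  have g'0: "0 \<le> \<gamma>'" unfolding \<gamma>'_def using b0 Suc.prems g by auto
  have "\<gamma> * \<rho>\<^sup>2 / (1 - 2 * \<gamma>) \<le> \<rho>\<^sup>2 * \<beta>b / (1 - 2 * \<beta>b)"
    using Suc.prems bb g by (intro frac_le) (auto intro: mult_right_mono simp: mult.commute)
  then have g'1: "\<gamma>' \<le> \<beta>b" unfolding \<gamma>'_def using sup by simp
  let ?F = "\<lambda>z. ennreal (exp (\<beta> * (\<Sum>r<Suc n. (U \<rho> z r)\<^sup>2) + \<gamma> * (U \<rho> z (Suc n))\<^sup>2))"
  let ?G = "\<lambda>z. ennreal (exp (\<beta> * (\<Sum>r<n. (U \<rho> z r)\<^sup>2) + \<gamma>' * (U \<rho> z n)\<^sup>2))"
  have Fm: "?F \<in> borel_measurable (PiM (insert (Suc n) {..n}) (\<lambda>_. stdN))"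
  proof -
    have "(\<lambda>z. U \<rho> z r) \<in> borel_measurable (PiM {..Suc n} (\<lambda>_. stdN))" if "r \<le> Suc n" for r
      using U_meas that by blast
    then have "?F \<in> borel_measurable (PiM {..Suc n} (\<lambda>_. stdN))"
      by (intro measurable_compose[OF _ measurable_ennreal] borel_measurable_exp borel_measurable_add
          borel_measurable_times borel_measurable_const borel_measurable_sum borel_measurable_power) auto
    then show ?thesis by (simp add: atMost_Suc)
  qed
  have "(\<integral>\<^sup>+z. ?F z \<partial>PiM {..Suc n} (\<lambda>_. stdN)) = (\<integral>\<^sup>+z. ?F z \<partial>PiM (insert (Suc n) {..n}) (\<lambda>_. stdN))"
    by (simp add: atMost_Suc)
  also have "\<dots> = (\<integral>\<^sup>+x. (\<integral>\<^sup>+y. ?F (x(Suc n := y)) \<partial>stdN) \<partial>PiM {..n} (\<lambda>_. stdN))"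
    by (rule stdN_prod.product_nn_integral_insert[OF _ _ Fm]) auto
  also have "\<dots> = (\<integral>\<^sup>+x. ennreal (1 / sqrt (1 - 2 * \<gamma>)) * ?G x \<partial>PiM {..n} (\<lambda>_. stdN))"
  proof (rule nn_integral_cong)
    fix x :: "nat \<Rightarrow> real"
    define u where "u = U \<rho> x n"
    define S where "S = (\<Sum>r<n. (U \<rho> x r)\<^sup>2)"
    have Fx: "?F (x(Suc n := y)) = ennreal (exp (\<beta> * S + \<beta> * u\<^sup>2)) * ennreal (exp (\<gamma> * (y + \<rho> * u)\<^sup>2))" for y
    proof -
      have "(\<Sum>r<Suc n. (U \<rho> (x(Suc n := y)) r)\<^sup>2) = S + u\<^sup>2"
        unfolding S_def u_def by (simp add: U_upd)
      moreover have "U \<rho> (x(Suc n := y)) (Suc n) = y + \<rho> * u"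
        unfolding u_def by (simp add: U_Suc U_upd)
      ultimately have eqx: "\<beta> * (\<Sum>r<Suc n. (U \<rho> (x(Suc n := y)) r)\<^sup>2) + \<gamma> * (U \<rho> (x(Suc n := y)) (Suc n))\<^sup>2
          = (\<beta> * S + \<beta> * u\<^sup>2) + \<gamma> * (y + \<rho> * u)\<^sup>2"
        by (simp add: distrib_left)
      show ?thesis
        unfolding eqx exp_add[of "\<beta> * S + \<beta> * u\<^sup>2"] by (rule ennreal_mult) auto
    qed
    have "(\<integral>\<^sup>+y. ?F (x(Suc n := y)) \<partial>stdN) = ennreal (exp (\<beta> * S + \<beta> * u\<^sup>2)) * (\<integral>\<^sup>+y. ennreal (exp (\<gamma> * (y + \<rho> * u)\<^sup>2)) \<partial>stdN)"
      unfolding Fx by (rule nn_integral_cmult) auto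
    also have "\<dots> = ennreal (exp (\<beta> * S + \<beta> * u\<^sup>2)) * ennreal (exp (\<gamma> * (\<rho> * u)\<^sup>2 / (1 - 2 * \<gamma>)) / sqrt (1 - 2 * \<gamma>))"
      by (simp add: gauss_shift[OF g])
    also have "\<dots> = ennreal (1 / sqrt (1 - 2 * \<gamma>)) * ?G x"
    proof -
      have "\<beta> * S + \<beta> * u\<^sup>2 + \<gamma> * (\<rho> * u)\<^sup>2 / (1 - 2 * \<gamma>) = \<beta> * S + \<gamma>' * u\<^sup>2"
      proof -
        have "\<gamma> * (\<rho> * u)\<^sup>2 / (1 - 2 * \<gamma>) = (\<gamma> * \<rho>\<^sup>2 / (1 - 2 * \<gamma>)) * u\<^sup>2"
          by (simp add: power_mult_distrib)
        then show ?thesis unfolding \<gamma>'_def by (simp add: distrib_right)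
      qed
      then have "exp (\<beta> * S + \<beta> * u\<^sup>2) * (exp (\<gamma> * (\<rho> * u)\<^sup>2 / (1 - 2 * \<gamma>)) / sqrt (1 - 2 * \<gamma>))
          = 1 / sqrt (1 - 2 * \<gamma>) * exp (\<beta> * S + \<gamma>' * u\<^sup>2)"
      proof -
        have "exp (\<beta> * S + \<beta> * u\<^sup>2) * (exp (\<gamma> * (\<rho> * u)\<^sup>2 / (1 - 2 * \<gamma>)) / sqrt (1 - 2 * \<gamma>))
           = exp (\<beta> * S + \<beta> * u\<^sup>2 + \<gamma> * (\<rho> * u)\<^sup>2 / (1 - 2 * \<gamma>)) / sqrt (1 - 2 * \<gamma>)"
          by (simp add: exp_add)
        also have "\<dots> = 1 / sqrt (1 - 2 * \<gamma>) * exp (\<beta> * S + \<gamma>' * u\<^sup>2)"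
          unfolding \<open>\<beta> * S + \<beta> * u\<^sup>2 + \<gamma> * (\<rho> * u)\<^sup>2 / (1 - 2 * \<gamma>) = \<beta> * S + \<gamma>' * u\<^sup>2\<close> by simp
        finally show ?thesis .
      qed
      then show ?thesis unfolding S_def u_def using g
        by (intro ennreal_mult_eq) auto
    qed
    finally show "(\<integral>\<^sup>+y. ?F (x(Suc n := y)) \<partial>stdN) = ennreal (1 / sqrt (1 - 2 * \<gamma>)) * ?G x" .
  qed
  also have "\<dots> = ennreal (1 / sqrt (1 - 2 * \<gamma>)) * (\<integral>\<^sup>+x. ?G x \<partial>PiM {..n} (\<lambda>_. stdN))"
  proof (rule nn_integral_cmult)
    have "(\<lambda>z. U \<rho> z r) \<in> borel_measurable (PiM {..n} (\<lambda>_. stdN))" if "r \<le> n" for r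
      using U_meas that by blast
    then show "?G \<in> borel_measurable (PiM {..n} (\<lambda>_. stdN))"
      by (intro measurable_compose[OF _ measurable_ennreal] borel_measurable_exp borel_measurable_add
          borel_measurable_times borel_measurable_const borel_measurable_sum borel_measurable_power) auto
  qed
  also have "\<dots> \<le> ennreal (1 / sqrt (1 - 2 * \<gamma>)) * ennreal ((1 - 2 * \<beta>b) powr (- (real n + 1) / 2))"
    by (intro mult_left_mono Suc.IH g'0 g'1) auto
  also have "\<dots> \<le> ennreal ((1 - 2 * \<beta>b) powr (- (real (Suc n) + 1) / 2))"
  proof -
    have "1 / sqrt (1 - 2 * \<gamma>) \<le> 1 / sqrt (1 - 2 * \<beta>b)"
      using Suc.prems bb by (intro divide_left_mono) auto
    also have "\<dots> = (1 - 2 * \<beta>b) powr (- 1 / 2)"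
      using bb by (simp add: powr_minus_divide powr_half_sqrt)
    finally have "1 / sqrt (1 - 2 * \<gamma>) * (1 - 2 * \<beta>b) powr (- (real n + 1) / 2)
        \<le> (1 - 2 * \<beta>b) powr (- 1 / 2) * (1 - 2 * \<beta>b) powr (- (real n + 1) / 2)"
      by (intro mult_right_mono) auto
    also have "\<dots> = (1 - 2 * \<beta>b) powr (- (real (Suc n) + 1) / 2)"
    proof -
      have "- 1 / 2 + (- (real n + 1) / 2) = - (real (Suc n) + 1) / 2" by (simp add: field_simps)
      then show ?thesis by (metis powr_add)
    qed
    finally show ?thesis using g by (intro ennreal_mult_le) auto
  qed
  finally show ?case .
qed

lemma OU_prob: "OU_process M \<kappa> B \<Longrightarrow> prob_space M"
  unfolding OU_process_def by (rule conjunct1)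

lemma cg_measurable: "centered_gaussian_rv M X v \<Longrightarrow> X \<in> borel_measurable M"
  unfolding centered_gaussian_rv_def
  by (auto dest: distributed_measurable)

lemma OU_gauss:
  fixes B :: "'a \<Rightarrow> real \<Rightarrow> real ^ 'b" and n :: nat
  assumes "OU_process M \<kappa> B" "\<forall>k<n. 0 \<le> s k"
  shows "centered_gaussian_rv M (\<lambda>\<omega>. \<Sum>k<n. c k * (B \<omega> (s k) $ i k))
          (\<Sum>k<n. \<Sum>m<n. c k * c m * (if i k = i m then OU_cov \<kappa> (s k) (s m) else 0))"
proof -
  have "\<forall>(n::nat) (s::nat \<Rightarrow> real) (i::nat \<Rightarrow> 'b) (c::nat \<Rightarrow> real).
        (\<forall>k<n. s k \<ge> 0) \<longrightarrow>
        centered_gaussian_rv M (\<lambda>\<omega>. \<Sum>k<n. c k * (B \<omega> (s k) $ i k))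
          (\<Sum>k<n. \<Sum>m<n. c k * c m * (if i k = i m then OU_cov \<kappa> (s k) (s m) else 0))"
    using assms(1) unfolding OU_process_def by (rule conjunct2[OF conjunct2])
  then show ?thesis using assms(2) by simp
qed


lemma OU_meas:
  assumes "OU_process M \<kappa> B" "s \<ge> 0"
  shows "(\<lambda>\<omega>. B \<omega> s $ i) \<in> borel_measurable M"
proof -
  have "centered_gaussian_rv M (\<lambda>\<omega>. B \<omega> s $ i) (OU_cov \<kappa> s s)"
    using OU_gauss[OF assms(1), where n=1 and s="\<lambda>_. s" and c="\<lambda>_. 1" and i="\<lambda>_. i"] assms(2) by simp
  from cg_measurable[OF this] show ?thesis by simp
qed

lemma OU_mgf:
  fixes J :: "'j set"
  assumes OU: "OU_process M \<kappa> B" and J: "finite J" and s: "\<And>j. j \<in> J \<Longrightarrow> sj j \<ge> 0"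
  shows "(\<integral>\<^sup>+\<omega>. ennreal (exp (\<Sum>j\<in>J. c j * (B \<omega> (sj j) $ ij j))) \<partial>M)
    = ennreal (exp ((\<Sum>j\<in>J. \<Sum>j'\<in>J. c j * c j' * (if ij j = ij j' then OU_cov \<kappa> (sj j) (sj j') else 0)) / 2))"
proof -
  obtain e where e: "bij_betw e {..<card J} J"
    using ex_bij_betw_nat_finite[OF J] by (auto simp: atLeast0LessThan)
  have pos: "\<forall>k<card J. 0 \<le> (sj \<circ> e) k"
    using e s unfolding bij_betw_def by auto
  have G: "centered_gaussian_rv M (\<lambda>\<omega>. \<Sum>k<card J. (c \<circ> e) k * (B \<omega> ((sj \<circ> e) k) $ (ij \<circ> e) k))
      (\<Sum>k<card J. \<Sum>m<card J. (c \<circ> e) k * (c \<circ> e) m * (if (ij \<circ> e) k = (ij \<circ> e) m then OU_cov \<kappa> ((sj \<circ> e) k) ((sj \<circ> e) m) else 0))"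
    by (rule OU_gauss[OF OU pos])
  have e1: "(\<Sum>k<card J. (c \<circ> e) k * (B \<omega> ((sj \<circ> e) k) $ (ij \<circ> e) k)) = (\<Sum>j\<in>J. c j * (B \<omega> (sj j) $ ij j))" for \<omega>
    using sum.reindex_bij_betw[OF e, of "\<lambda>j. c j * (B \<omega> (sj j) $ ij j)"] by (simp add: comp_def)
  have e2: "(\<Sum>m<card J. (c \<circ> e) k * (c \<circ> e) m * (if (ij \<circ> e) k = (ij \<circ> e) m then OU_cov \<kappa> ((sj \<circ> e) k) ((sj \<circ> e) m) else 0))
     = (\<Sum>j'\<in>J. c (e k) * c j' * (if ij (e k) = ij j' then OU_cov \<kappa> (sj (e k)) (sj j') else 0))" for k
    unfolding comp_def
    using sum.reindex_bij_betw[OF e, of "\<lambda>j'. c (e k) * c j' * (if ij (e k) = ij j' then OU_cov \<kappa> (sj (e k)) (sj j') else 0)"]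
    by simp
  have e3: "(\<Sum>k<card J. (\<Sum>j'\<in>J. c (e k) * c j' * (if ij (e k) = ij j' then OU_cov \<kappa> (sj (e k)) (sj j') else 0)))
     = (\<Sum>j\<in>J. \<Sum>j'\<in>J. c j * c j' * (if ij j = ij j' then OU_cov \<kappa> (sj j) (sj j') else 0))"
    using sum.reindex_bij_betw[OF e, of "\<lambda>j. \<Sum>j'\<in>J. c j * c j' * (if ij j = ij j' then OU_cov \<kappa> (sj j) (sj j') else 0)"]
    by simp
  have G': "centered_gaussian_rv M (\<lambda>\<omega>. \<Sum>j\<in>J. c j * (B \<omega> (sj j) $ ij j))
     (\<Sum>j\<in>J. \<Sum>j'\<in>J. c j * c j' * (if ij j = ij j' then OU_cov \<kappa> (sj j) (sj j') else 0))"
    using G unfolding e1 e2 e3 .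
  show ?thesis
    using gaussian_mgf[OF OU_prob[OF OU] G'] by simp
qed

lemma geo_sq:
  fixes \<rho> :: real
  shows "(1 - \<rho>\<^sup>2) * (\<Sum>r\<in>{M..<M+d}. \<rho> ^ (2*r)) = \<rho> ^ (2*M) - \<rho> ^ (2*(M+d))"
proof (induction d)
  case 0 then show ?case by simp
next
  case (Suc d)
  have "(1 - \<rho>\<^sup>2) * (\<Sum>r\<in>{M..<M+Suc d}. \<rho> ^ (2*r)) = (1 - \<rho>\<^sup>2) * (\<Sum>r\<in>{M..<M+d}. \<rho> ^ (2*r)) + (1 - \<rho>\<^sup>2) * \<rho> ^ (2*(M+d))"
    by (simp add: distrib_left)
  also have "\<dots> = \<rho> ^ (2*M) - \<rho> ^ (2*(M+d)) + (1 - \<rho>\<^sup>2) * \<rho> ^ (2*(M+d))"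
    using Suc by simp
  also have "\<dots> = \<rho> ^ (2*M) - \<rho> ^ (2*(M+Suc d))"
    by (simp add: algebra_simps power2_eq_square power_add power_mult_distrib)
  finally show ?case .
qed

lemma cov_grid:
  fixes \<kappa> h :: real
  assumes k: "\<kappa> > 0" and h: "h > 0" and p: "p < m" and q: "q < m"
  defines "\<rho> \<equiv> exp (- \<kappa> * h)"
  shows "OU_cov \<kappa> (real (m - p) * h) (real (m - q) * h)
       = (1 - \<rho>\<^sup>2) / (2 * \<kappa>) * (\<Sum>r\<in>{max p q..<m}. \<rho> ^ (r - p) * \<rho> ^ (r - q))"
proof -
  define M where "M = max p q"
  have M: "M \<le> m" "p \<le> M" "q \<le> M" using p q by (auto simp: M_def)
  have rpos: "\<rho> > 0" by (simp add: \<rho>_def)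
  have r1: "\<rho> < 1" using k h by (simp add: \<rho>_def)
  have rr: "\<rho>\<^sup>2 < 1" using rpos r1 by (simp add: power_less_one_iff abs_square_less_1)
  have pw: "\<rho> ^ n = exp (- \<kappa> * h * real n)" for n
    unfolding \<rho>_def by (metis exp_of_nat_mult mult.commute)
  have "(\<Sum>r\<in>{M..<m}. \<rho> ^ (r - p) * \<rho> ^ (r - q)) = (\<Sum>r\<in>{M..<m}. \<rho> ^ (2*r) / \<rho> ^ (p + q))"
  proof (rule sum.cong)
    fix r assume "r \<in> {M..<m}"
    then have "p \<le> r" "q \<le> r" using M by auto
    then have "\<rho> ^ (r - p) * \<rho> ^ (r - q) * \<rho> ^ (p + q) = \<rho> ^ (2 * r)"
      by (simp add: power_add[symmetric] mult_2)
    then show "\<rho> ^ (r - p) * \<rho> ^ (r - q) = \<rho> ^ (2*r) / \<rho> ^ (p + q)"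
      using rpos by (simp add: field_simps)
  qed simp
  also have "\<dots> = (\<Sum>r\<in>{M..<M + (m - M)}. \<rho> ^ (2*r)) / \<rho> ^ (p + q)"
    using M by (simp add: sum_divide_distrib)
  also have "\<dots> = (\<rho> ^ (2*M) - \<rho> ^ (2*m)) / ((1 - \<rho>\<^sup>2) * \<rho> ^ (p + q))"
  proof -
    have g: "(1 - \<rho>\<^sup>2) * (\<Sum>r\<in>{M..<M + (m - M)}. \<rho> ^ (2*r)) = \<rho> ^ (2*M) - \<rho> ^ (2*m)"
      using geo_sq[of \<rho> M "m - M"] M by simp
    have ne: "1 - \<rho>\<^sup>2 \<noteq> 0" using rr by simp
    have "(\<Sum>r\<in>{M..<M + (m - M)}. \<rho> ^ (2*r)) = (\<rho> ^ (2*M) - \<rho> ^ (2*m)) / (1 - \<rho>\<^sup>2)"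
      using g ne by (simp add: eq_divide_eq mult.commute)
    then show ?thesis by simp
  qed
  finally have S: "(\<Sum>r\<in>{M..<m}. \<rho> ^ (r - p) * \<rho> ^ (r - q)) = (\<rho> ^ (2*M) - \<rho> ^ (2*m)) / ((1 - \<rho>\<^sup>2) * \<rho> ^ (p + q))" .
  have "(1 - \<rho>\<^sup>2) / (2 * \<kappa>) * (\<Sum>r\<in>{M..<m}. \<rho> ^ (r - p) * \<rho> ^ (r - q))
     = (\<rho> ^ (2*M) / \<rho> ^ (p + q) - \<rho> ^ (2*m) / \<rho> ^ (p + q)) / (2 * \<kappa>)"
    unfolding S using rr rpos k by (simp add: field_simps)
  also have "\<rho> ^ (2*M) / \<rho> ^ (p + q) = exp (- \<kappa> * \<bar>real (m - p) * h - real (m - q) * h\<bar>)"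
  proof -
    have "real (2 * M) - real (p + q) = \<bar>real (m - p) - real (m - q)\<bar>"
      using p q by (auto simp: M_def of_nat_diff)
    then have ab: "\<bar>real (m - p) * h - real (m - q) * h\<bar> = (real (2 * M) - real (p + q)) * h"
      using h by (simp add: left_diff_distrib[symmetric] abs_mult)
    show ?thesis unfolding pw exp_diff[symmetric]
      by (subst ab) (simp add: algebra_simps)
  qed
  also have "\<rho> ^ (2*m) / \<rho> ^ (p + q) = exp (- \<kappa> * (real (m - p) * h + real (m - q) * h))"
  proof -
    have ab: "real (m - p) * h + real (m - q) * h = (real (2 * m) - real (p + q)) * h"
      using p q by (simp add: of_nat_diff algebra_simps)
    show ?thesis unfolding pw exp_diff[symmetric]
      by (subst ab) (simp add: algebra_simps)
  qed
  finally show ?thesis unfolding OU_cov_def M_def by (rule sym)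
qed

lemma U_as_sum: "r < m \<Longrightarrow> U \<rho> z r = (\<Sum>p<m. if p \<le> r then \<rho> ^ (r - p) * z p else 0)"
proof -
  assume r: "r < m"
  have "(\<Sum>p<m. if p \<le> r then \<rho> ^ (r - p) * z p else 0) = (\<Sum>p\<in>{p\<in>{..<m}. p \<le> r}. \<rho> ^ (r - p) * z p)"
    by (rule sum.inter_filter[symmetric]) simp
  also have "{p\<in>{..<m}. p \<le> r} = {..r}" using r by auto
  finally show ?thesis unfolding U_def by simp
qed

lemma quad_grid:
  fixes \<kappa> h :: real and z :: "nat \<Rightarrow> real"
  assumes k: "\<kappa> > 0" and h: "h > 0"
  defines "\<rho> \<equiv> exp (- \<kappa> * h)"
  shows "(\<Sum>p<m. \<Sum>q<m. z p * z q * OU_cov \<kappa> (real (m - p) * h) (real (m - q) * h))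
       = (1 - \<rho>\<^sup>2) / (2 * \<kappa>) * (\<Sum>r<m. (U \<rho> z r)\<^sup>2)"
proof -
  let ?a = "\<lambda>r p. if p \<le> r then \<rho> ^ (r - p) * z p else 0"
  have "(\<Sum>r<m. (U \<rho> z r)\<^sup>2) = (\<Sum>r<m. \<Sum>p<m. \<Sum>q<m. ?a r p * ?a r q)"
  proof (rule sum.cong)
    fix r assume "r \<in> {..<m}"
    then show "(U \<rho> z r)\<^sup>2 = (\<Sum>p<m. \<Sum>q<m. ?a r p * ?a r q)"
      by (simp add: U_as_sum power2_eq_square sum_product)
  qed simp
  also have "\<dots> = (\<Sum>p<m. \<Sum>r<m. \<Sum>q<m. ?a r p * ?a r q)"
    by (rule sum.swap)
  also have "\<dots> = (\<Sum>p<m. \<Sum>q<m. \<Sum>r<m. ?a r p * ?a r q)"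
    by (intro sum.cong refl sum.swap)
  also have "\<dots> = (\<Sum>p<m. \<Sum>q<m. z p * z q * (\<Sum>r\<in>{max p q..<m}. \<rho> ^ (r - p) * \<rho> ^ (r - q)))"
  proof (intro sum.cong refl)
    fix p q
    have "(\<Sum>r<m. ?a r p * ?a r q) = (\<Sum>r<m. if max p q \<le> r then z p * z q * (\<rho> ^ (r - p) * \<rho> ^ (r - q)) else 0)"
      by (intro sum.cong refl) auto
    also have "\<dots> = (\<Sum>r\<in>{r\<in>{..<m}. max p q \<le> r}. z p * z q * (\<rho> ^ (r - p) * \<rho> ^ (r - q)))"
      by (rule sum.inter_filter[symmetric]) simp
    also have "{r\<in>{..<m}. max p q \<le> r} = {max p q..<m}" by auto
    finally show "(\<Sum>r<m. ?a r p * ?a r q) = z p * z q * (\<Sum>r\<in>{max p q..<m}. \<rho> ^ (r - p) * \<rho> ^ (r - q))"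
      by (simp add: sum_distrib_left)
  qed
  finally have E: "(\<Sum>r<m. (U \<rho> z r)\<^sup>2) = (\<Sum>p<m. \<Sum>q<m. z p * z q * (\<Sum>r\<in>{max p q..<m}. \<rho> ^ (r - p) * \<rho> ^ (r - q)))" .
  have P: "z p * z q * OU_cov \<kappa> (real (m - p) * h) (real (m - q) * h) =
         (1 - \<rho>\<^sup>2) / (2 * \<kappa>) * (z p * z q * (\<Sum>r\<in>{max p q..<m}. \<rho> ^ (r - p) * \<rho> ^ (r - q)))"
    if "p < m" "q < m" for p q
    using cov_grid[OF k h that] unfolding \<rho>_def by simp
  have D: "\<And>c (g::nat \<Rightarrow> nat \<Rightarrow> real) A B. (\<Sum>p\<in>A. \<Sum>q\<in>B. c * g p q) = c * (\<Sum>p\<in>A. \<Sum>q\<in>B. g p q)"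
    by (simp add: sum_distrib_left)
  have "(\<Sum>p<m. \<Sum>q<m. z p * z q * OU_cov \<kappa> (real (m - p) * h) (real (m - q) * h))
     = (\<Sum>p<m. \<Sum>q<m. (1 - \<rho>\<^sup>2) / (2 * \<kappa>) * (z p * z q * (\<Sum>r\<in>{max p q..<m}. \<rho> ^ (r - p) * \<rho> ^ (r - q))))"
    by (intro sum.cong refl, rule P) auto
  also have "\<dots> = (1 - \<rho>\<^sup>2) / (2 * \<kappa>) * (\<Sum>p<m. \<Sum>q<m. z p * z q * (\<Sum>r\<in>{max p q..<m}. \<rho> ^ (r - p) * \<rho> ^ (r - q)))"
    by (rule D)
  finally show ?thesis unfolding E .
qed

lemma meas_exp: "f \<in> borel_measurable M \<Longrightarrow> (\<lambda>x. exp (f x :: real)) \<in> borel_measurable M"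
  using measurable_compose[OF _ borel_measurable_exp] .

definition Pm :: "nat \<Rightarrow> (nat \<Rightarrow> real) measure" where
  "Pm m = PiM {..<m} (\<lambda>_. stdN)"

definition Sm :: "nat \<Rightarrow> ('n \<Rightarrow> nat \<Rightarrow> real) measure" where
  "Sm m = PiM UNIV (\<lambda>_. Pm m)"

lemma prob_Pm: "prob_space (Pm m)"
  unfolding Pm_def by (rule prob_space_PiM) (rule prob_space_stdN)

lemma prob_Sm: "prob_space (Sm m)"
  unfolding Sm_def by (rule prob_space_PiM) (rule prob_Pm)

lemma psf_stdN: "product_sigma_finite (\<lambda>_::nat. stdN)"
  by (simp add: product_sigma_finite_def prob_space_imp_sigma_finite prob_space_stdN)

lemma psf_Pm: "product_sigma_finite (\<lambda>_::'n. Pm m)"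
  by (simp add: product_sigma_finite_def prob_space_imp_sigma_finite prob_Pm)

lemma comp_meas_Pm: "k < m \<Longrightarrow> (\<lambda>w. w k) \<in> borel_measurable (Pm m)"
  unfolding Pm_def using measurable_component_singleton[of k "{..<m}" "\<lambda>_. stdN"] by simp

lemma comp_meas_Sm: "k < m \<Longrightarrow> (\<lambda>z. z i k) \<in> borel_measurable (Sm m)"
proof -
  assume k: "k < m"
  have "(\<lambda>z. z i) \<in> measurable (Sm m) (Pm m)"
    unfolding Sm_def by (rule measurable_component_singleton) simp
  from measurable_compose[OF this comp_meas_Pm[OF k]] show ?thesis by simp
qed

lemma hs_Pm:
  fixes y :: "nat \<Rightarrow> real"
  shows "(\<integral>\<^sup>+w. (\<Prod>k<m. ennreal (exp (c * w k * y k))) \<partial>Pm m) = ennreal (exp (c\<^sup>2 / 2 * (\<Sum>k<m. (y k)\<^sup>2)))"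
proof -
  have "(\<integral>\<^sup>+w. (\<Prod>k<m. ennreal (exp (c * w k * y k))) \<partial>Pm m) = (\<Prod>k<m. \<integral>\<^sup>+x. ennreal (exp (c * x * y k)) \<partial>stdN)"
    unfolding Pm_def
    by (rule product_sigma_finite.product_nn_integral_prod[OF psf_stdN, of "{..<m}" "\<lambda>k x. ennreal (exp (c * x * y k))"]) auto
  also have "\<dots> = (\<Prod>k<m. ennreal (exp ((c * y k)\<^sup>2 / 2)))"
  proof (intro prod.cong refl)
    fix k
    show "(\<integral>\<^sup>+x. ennreal (exp (c * x * y k)) \<partial>stdN) = ennreal (exp ((c * y k)\<^sup>2 / 2))"
      using hs_identity[of "c * y k"] by (simp add: mult_ac)
  qed
  also have "\<dots> = ennreal (\<Prod>k<m. exp ((c * y k)\<^sup>2 / 2))"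
    by (rule prod_ennreal) simp
  also have "(\<Prod>k<m. exp ((c * y k)\<^sup>2 / 2)) = exp (c\<^sup>2 / 2 * (\<Sum>k<m. (y k)\<^sup>2))"
    by (simp add: exp_sum[symmetric] sum_distrib_left power_mult_distrib)
  finally show ?thesis .
qed

lemma hs_Sm:
  fixes y :: "'n::finite \<Rightarrow> nat \<Rightarrow> real"
  shows "(\<integral>\<^sup>+z. ennreal (exp (\<Sum>i\<in>UNIV. \<Sum>k<m. c * z i k * y i k)) \<partial>(Sm m :: ('n \<Rightarrow> nat \<Rightarrow> real) measure))
       = ennreal (exp (c\<^sup>2 / 2 * (\<Sum>i\<in>UNIV. \<Sum>k<m. (y i k)\<^sup>2)))"
proof -
  have "(\<integral>\<^sup>+z. ennreal (exp (\<Sum>i\<in>UNIV. \<Sum>k<m. c * z i k * y i k)) \<partial>(Sm m :: ('n \<Rightarrow> nat \<Rightarrow> real) measure))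
      = (\<integral>\<^sup>+z. (\<Prod>i\<in>UNIV. (\<Prod>k<m. ennreal (exp (c * z i k * y i k)))) \<partial>(Sm m :: ('n \<Rightarrow> nat \<Rightarrow> real) measure))"
    by (intro nn_integral_cong) (simp add: exp_sum prod_ennreal prod_nonneg)
  also have "\<dots> = (\<Prod>i\<in>UNIV. \<integral>\<^sup>+w. (\<Prod>k<m. ennreal (exp (c * w k * y i k))) \<partial>Pm m)"
    unfolding Sm_def
  proof (rule product_sigma_finite.product_nn_integral_prod[OF psf_Pm])
    fix i :: 'n
    show "(\<lambda>w. \<Prod>k<m. ennreal (exp (c * w k * y i k))) \<in> borel_measurable (Pm m)"
      by (intro borel_measurable_prod_ennreal measurable_compose[OF _ measurable_ennreal]
          meas_exp borel_measurable_times borel_measurable_const comp_meas_Pm) auto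
  qed simp
  also have "\<dots> = (\<Prod>i\<in>UNIV. ennreal (exp (c\<^sup>2 / 2 * (\<Sum>k<m. (y i k)\<^sup>2))))"
    by (simp add: hs_Pm)
  also have "\<dots> = ennreal (exp (c\<^sup>2 / 2 * (\<Sum>i\<in>UNIV. \<Sum>k<m. (y i k)\<^sup>2)))"
    by (simp add: prod_ennreal exp_sum[symmetric] sum_distrib_left)
  finally show ?thesis .
qed

lemma sum_cp: "(\<Sum>j\<in>A \<times> B. F j) = (\<Sum>i\<in>A. \<Sum>k\<in>B. F (i, k))"
  by (simp add: sum.cartesian_product)

lemma var_conv:
  fixes f :: "'n::finite \<Rightarrow> nat \<Rightarrow> real" and K :: "nat \<Rightarrow> nat \<Rightarrow> real"
  shows "(\<Sum>j\<in>UNIV \<times> {..<m}. \<Sum>j'\<in>UNIV \<times> {..<m}. f (fst j) (snd j) * f (fst j') (snd j') * (if fst j = fst j' then K (snd j) (snd j') else 0))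
       = (\<Sum>i\<in>UNIV. \<Sum>k<m. \<Sum>k'<m. f i k * f i k' * K k k')"
proof -
  have "(\<Sum>j\<in>UNIV \<times> {..<m}. \<Sum>j'\<in>UNIV \<times> {..<m}. f (fst j) (snd j) * f (fst j') (snd j') * (if fst j = fst j' then K (snd j) (snd j') else 0))
      = (\<Sum>i\<in>UNIV. \<Sum>k<m. \<Sum>i'\<in>UNIV. \<Sum>k'<m. f i k * f i' k' * (if i = i' then K k k' else 0))"
    unfolding sum_cp fst_conv snd_conv by (rule refl)
  also have "\<dots> = (\<Sum>i\<in>UNIV. \<Sum>k<m. \<Sum>i'\<in>UNIV. if i = i' then (\<Sum>k'<m. f i k * f i' k' * K k k') else 0)"
    by (intro sum.cong refl) auto
  also have "\<dots> = (\<Sum>i\<in>UNIV. \<Sum>k<m. \<Sum>k'<m. f i k * f i k' * K k k')"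
    by (simp add: sum.delta)
  finally show ?thesis .
qed

lemma prod_meas_lin:
  fixes Y :: "'n::finite \<Rightarrow> nat \<Rightarrow> 'a \<Rightarrow> real"
  assumes Y: "\<And>i k. k < m \<Longrightarrow> Y i k \<in> borel_measurable M"
  shows "(\<lambda>x. ennreal (exp (\<Sum>i\<in>UNIV. \<Sum>k<m. c * snd x i k * Y i k (fst x)))) \<in> borel_measurable (M \<Otimes>\<^sub>M (Sm m :: ('n \<Rightarrow> nat \<Rightarrow> real) measure))"
proof -
  have a: "(\<lambda>x. snd x i k) \<in> borel_measurable (M \<Otimes>\<^sub>M (Sm m :: ('n \<Rightarrow> nat \<Rightarrow> real) measure))" if "k < m" for i k
    by (rule measurable_compose[OF measurable_snd comp_meas_Sm[OF that]])
  have b: "(\<lambda>x. Y i k (fst x)) \<in> borel_measurable (M \<Otimes>\<^sub>M (Sm m :: ('n \<Rightarrow> nat \<Rightarrow> real) measure))" if "k < m" for i k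
    by (rule measurable_compose[OF measurable_fst Y[OF that]])
  show ?thesis
    by (intro measurable_compose[OF _ measurable_ennreal] meas_exp borel_measurable_sum
        borel_measurable_times borel_measurable_const a b) auto
qed

lemma E_quad:
  fixes B :: "'a \<Rightarrow> real \<Rightarrow> real ^ 'n" and \<kappa> h c :: real
  assumes OU: "OU_process M \<kappa> B" and k: "\<kappa> > 0" and h: "h > 0"
  defines "\<rho> \<equiv> exp (- \<kappa> * h)"
  shows "(\<integral>\<^sup>+\<omega>. ennreal (exp (c\<^sup>2 / 2 * (\<Sum>i\<in>UNIV. \<Sum>k<m. (B \<omega> (real (m - k) * h) $ i)\<^sup>2))) \<partial>M)
       = (\<integral>\<^sup>+w. ennreal (exp (c\<^sup>2 / 2 * ((1 - \<rho>\<^sup>2) / (2 * \<kappa>)) * (\<Sum>r<m. (U \<rho> w r)\<^sup>2))) \<partial>Pm m) ^ CARD('n)"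
proof -
  let ?Y = "\<lambda>i k \<omega>. B \<omega> (real (m - k) * h) $ i"
  let ?S = "Sm m :: ('n \<Rightarrow> nat \<Rightarrow> real) measure"
  let ?\<beta> = "c\<^sup>2 / 2 * ((1 - \<rho>\<^sup>2) / (2 * \<kappa>))"
  interpret PM: prob_space M by (rule OU_prob[OF OU])
  interpret PS: prob_space ?S by (rule prob_Sm)
  interpret PMS: pair_sigma_finite M ?S
    by (intro pair_sigma_finite.intro PM.sigma_finite_measure_axioms PS.sigma_finite_measure_axioms)
  have Ym: "?Y i k \<in> borel_measurable M" for i k
    using OU_meas[OF OU, of "real (m - k) * h" i] h by simp
  have "(\<integral>\<^sup>+\<omega>. ennreal (exp (c\<^sup>2 / 2 * (\<Sum>i\<in>UNIV. \<Sum>k<m. (?Y i k \<omega>)\<^sup>2))) \<partial>M)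
      = (\<integral>\<^sup>+\<omega>. (\<integral>\<^sup>+z. ennreal (exp (\<Sum>i\<in>UNIV. \<Sum>k<m. c * z i k * ?Y i k \<omega>)) \<partial>?S) \<partial>M)"
    by (simp add: hs_Sm)
  also have "\<dots> = (\<integral>\<^sup>+z. (\<integral>\<^sup>+\<omega>. ennreal (exp (\<Sum>i\<in>UNIV. \<Sum>k<m. c * z i k * ?Y i k \<omega>)) \<partial>M) \<partial>?S)"
  proof (rule PMS.Fubini'[symmetric])
    show "case_prod (\<lambda>\<omega> z. ennreal (exp (\<Sum>i\<in>UNIV. \<Sum>k<m. c * z i k * ?Y i k \<omega>))) \<in> borel_measurable (M \<Otimes>\<^sub>M ?S)"
      using prod_meas_lin[of m ?Y M c, OF Ym] by (simp add: case_prod_beta')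
  qed
  also have "\<dots> = (\<integral>\<^sup>+z. ennreal (exp (?\<beta> * (\<Sum>i\<in>UNIV. \<Sum>r<m. (U \<rho> (z i) r)\<^sup>2))) \<partial>?S)"
  proof (rule nn_integral_cong)
    fix z :: "'n \<Rightarrow> nat \<Rightarrow> real"
    have s1: "(\<Sum>i\<in>UNIV. \<Sum>k<m. c * z i k * ?Y i k \<omega>) = (\<Sum>j\<in>UNIV \<times> {..<m}. (c * z (fst j) (snd j)) * (B \<omega> (real (m - snd j) * h) $ fst j))" for \<omega>
      by (subst sum_cp) simp
    have "(\<integral>\<^sup>+\<omega>. ennreal (exp (\<Sum>i\<in>UNIV. \<Sum>k<m. c * z i k * ?Y i k \<omega>)) \<partial>M)
       = ennreal (exp ((\<Sum>j\<in>UNIV \<times> {..<m}. \<Sum>j'\<in>UNIV \<times> {..<m}. (c * z (fst j) (snd j)) * (c * z (fst j') (snd j')) *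
            (if fst j = fst j' then OU_cov \<kappa> (real (m - snd j) * h) (real (m - snd j') * h) else 0)) / 2))"
      unfolding s1 by (rule OU_mgf[OF OU]) (use h in auto)
    also have "(\<Sum>j\<in>UNIV \<times> {..<m}. \<Sum>j'\<in>UNIV \<times> {..<m}. (c * z (fst j) (snd j)) * (c * z (fst j') (snd j')) *
            (if fst j = fst j' then OU_cov \<kappa> (real (m - snd j) * h) (real (m - snd j') * h) else 0))
        = (\<Sum>i\<in>UNIV. \<Sum>k<m. \<Sum>k'<m. (c * z i k) * (c * z i k') * OU_cov \<kappa> (real (m - k) * h) (real (m - k') * h))"
      by (rule var_conv[where f = "\<lambda>i k. c * z i k" and K = "\<lambda>k k'. OU_cov \<kappa> (real (m - k) * h) (real (m - k') * h)"])
    also have "\<dots> = (\<Sum>i\<in>UNIV. c\<^sup>2 * (\<Sum>k<m. \<Sum>k'<m. z i k * z i k' * OU_cov \<kappa> (real (m - k) * h) (real (m - k') * h)))"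
      by (simp add: sum_distrib_left power2_eq_square mult_ac)
    also have "\<dots> = (\<Sum>i\<in>UNIV. c\<^sup>2 * ((1 - \<rho>\<^sup>2) / (2 * \<kappa>) * (\<Sum>r<m. (U \<rho> (z i) r)\<^sup>2)))"
      unfolding \<rho>_def quad_grid[OF k h] by (rule refl)
    also have "\<dots> = c\<^sup>2 * ((1 - \<rho>\<^sup>2) / (2 * \<kappa>)) * (\<Sum>i\<in>UNIV. \<Sum>r<m. (U \<rho> (z i) r)\<^sup>2)"
      by (simp add: sum_distrib_left mult.assoc)
    finally have V: "(\<integral>\<^sup>+\<omega>. ennreal (exp (\<Sum>i\<in>UNIV. \<Sum>k<m. c * z i k * ?Y i k \<omega>)) \<partial>M)
        = ennreal (exp (c\<^sup>2 * ((1 - \<rho>\<^sup>2) / (2 * \<kappa>)) * (\<Sum>i\<in>UNIV. \<Sum>r<m. (U \<rho> (z i) r)\<^sup>2) / 2))" .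
    have "c\<^sup>2 * ((1 - \<rho>\<^sup>2) / (2 * \<kappa>)) * (\<Sum>i\<in>UNIV. \<Sum>r<m. (U \<rho> (z i) r)\<^sup>2) / 2 = ?\<beta> * (\<Sum>i\<in>UNIV. \<Sum>r<m. (U \<rho> (z i) r)\<^sup>2)"
      by simp
    with V show "(\<integral>\<^sup>+\<omega>. ennreal (exp (\<Sum>i\<in>UNIV. \<Sum>k<m. c * z i k * ?Y i k \<omega>)) \<partial>M)
        = ennreal (exp (?\<beta> * (\<Sum>i\<in>UNIV. \<Sum>r<m. (U \<rho> (z i) r)\<^sup>2)))" by simp
  qed
  also have "\<dots> = (\<integral>\<^sup>+z. (\<Prod>i\<in>UNIV. ennreal (exp (?\<beta> * (\<Sum>r<m. (U \<rho> (z i) r)\<^sup>2)))) \<partial>?S)"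
    by (intro nn_integral_cong) (simp add: sum_distrib_left exp_sum prod_ennreal prod_nonneg)
  also have "\<dots> = (\<Prod>i\<in>(UNIV::'n set). \<integral>\<^sup>+w. ennreal (exp (?\<beta> * (\<Sum>r<m. (U \<rho> w r)\<^sup>2))) \<partial>Pm m)"
    unfolding Sm_def
  proof (rule product_sigma_finite.product_nn_integral_prod[OF psf_Pm])
    fix i :: 'n
    have "(\<lambda>w. U \<rho> w r) \<in> borel_measurable (Pm m)" if "r < m" for r
      unfolding U_def
      by (intro borel_measurable_sum borel_measurable_times borel_measurable_const comp_meas_Pm) (use that in auto)
    then show "(\<lambda>w. ennreal (exp (?\<beta> * (\<Sum>r<m. (U \<rho> w r)\<^sup>2)))) \<in> borel_measurable (Pm m)"
      by (intro measurable_compose[OF _ measurable_ennreal] meas_exp borel_measurable_times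
          borel_measurable_const borel_measurable_sum borel_measurable_power) auto
  qed simp
  also have "\<dots> = (\<integral>\<^sup>+w. ennreal (exp (?\<beta> * (\<Sum>r<m. (U \<rho> w r)\<^sup>2))) \<partial>Pm m) ^ CARD('n)"
    by simp
  finally show ?thesis by simp
qed

lemma x_bounds:
  fixes y :: real assumes "y > 0"
  shows "1 - exp (- y) \<le> y" "y / (1 + y) \<le> 1 - exp (- y)" "1 - exp (-y) > 0"
proof -
  show "1 - exp (- y) \<le> y" using exp_ge_add_one_self[of "-y"] by simp
  have "1 + y \<le> exp y" by simp
  then have "exp (- y) \<le> 1 / (1 + y)"
    using assms by (simp add: exp_minus field_simps)
  then have "1 - 1 / (1 + y) \<le> 1 - exp (- y)" by simp
  moreover have "1 - 1 / (1 + y) = y / (1 + y)" using assms by (simp add: field_simps)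
  ultimately show "y / (1 + y) \<le> 1 - exp (- y)" by simp
  show "1 - exp (-y) > 0" using assms by simp
qed

lemma sup_cond:
  fixes \<kappa> a b h :: real
  assumes k: "\<kappa> > 0" and a: "a > 0" and b: "b > 0" and h: "h > 0"
    and hb: "2 * h * b < 1" and small: "4 * \<kappa> * b\<^sup>2 * h \<le> 2 * b * (\<kappa> - b) - a"
  defines "\<rho> \<equiv> exp (- \<kappa> * h)"
  shows "a * h * ((1 - \<rho>\<^sup>2) / (2 * \<kappa>)) + \<rho>\<^sup>2 * (h * b) / (1 - 2 * (h * b)) \<le> h * b"
proof -
  define x where "x = 1 - \<rho>\<^sup>2"
  have r2: "\<rho>\<^sup>2 = exp (- (2 * \<kappa> * h))"
    unfolding \<rho>_def by (simp add: power2_eq_square exp_add[symmetric])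
  have xpos: "x > 0" and xlow: "2 * \<kappa> * h / (1 + 2 * \<kappa> * h) \<le> x"
    using x_bounds[of "2 * \<kappa> * h"] k h unfolding x_def r2 by auto
  define \<beta> where "\<beta> = a * h * (x / (2 * \<kappa>))"
  have b0: "\<beta> \<ge> 0" unfolding \<beta>_def using a h k xpos by simp
  have c0: "b - a / (2 * \<kappa>) > 0"
  proof -
    have "0 < 4 * \<kappa> * b\<^sup>2 * h" using k b h by simp
    then have "a < 2 * b * (\<kappa> - b)" using small by linarith
    moreover have "2 * b * (\<kappa> - b) \<le> 2 * b * \<kappa>" using b by (simp add: algebra_simps)
    ultimately have "a < 2 * b * \<kappa>" by linarith
    then show ?thesis using k by (simp add: field_simps)
  qed
  have key: "2 * h * b\<^sup>2 \<le> x * (b - a / (2 * \<kappa>))"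
  proof -
    have "2 * h * b\<^sup>2 * (1 + 2 * \<kappa> * h) \<le> h * (2 * \<kappa> * b - a)"
    proof -
      have "2 * b\<^sup>2 + 4 * \<kappa> * b\<^sup>2 * h \<le> 2 * \<kappa> * b - a" using small by (simp add: algebra_simps power2_eq_square)
      then have "h * (2 * b\<^sup>2 + 4 * \<kappa> * b\<^sup>2 * h) \<le> h * (2 * \<kappa> * b - a)" using h by (intro mult_left_mono) auto
      then show ?thesis by (simp add: algebra_simps power2_eq_square)
    qed
    moreover have pos: "1 + 2 * \<kappa> * h > 0" using k h by (intro add_pos_pos) auto
    ultimately have "2 * h * b\<^sup>2 \<le> h * (2 * \<kappa> * b - a) / (1 + 2 * \<kappa> * h)"
      by (subst pos_le_divide_eq[OF pos])
    also have "\<dots> = 2 * \<kappa> * h / (1 + 2 * \<kappa> * h) * (b - a / (2 * \<kappa>))"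
    proof -
      have e: "2 * \<kappa> * h * (b - a / (2 * \<kappa>)) = h * (2 * \<kappa> * b - a)" using k by (simp add: field_simps)
      show ?thesis by (simp only: times_divide_eq_left e)
    qed
    also have "\<dots> \<le> x * (b - a / (2 * \<kappa>))"
      using xlow c0 by (intro mult_right_mono) auto
    finally show ?thesis .
  qed
  have s1: "\<beta> \<le> h * b * (x - 2 * h * b)"
  proof -
    have "\<beta> = h * (a * x / (2 * \<kappa>))" unfolding \<beta>_def by simp
    also have "\<dots> \<le> h * (b * x - 2 * h * b\<^sup>2)"
    proof -
      have "a * x / (2 * \<kappa>) = x * (a / (2 * \<kappa>))" by simp
      then have "a * x / (2 * \<kappa>) \<le> b * x - 2 * h * b\<^sup>2" using key by (simp add: algebra_simps)
      then show ?thesis using h by (intro mult_left_mono) auto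
    qed
    also have "\<dots> = h * b * (x - 2 * h * b)" by (simp add: algebra_simps power2_eq_square)
    finally show ?thesis .
  qed
  have s2: "\<beta> * (1 - 2 * h * b) \<le> \<beta>" using b0 h b by (simp add: mult_left_le)
  have d: "1 - 2 * (h * b) > 0" using hb by simp
  have "\<beta> * (1 - 2 * (h * b)) + (1 - x) * (h * b) \<le> h * b * (1 - 2 * (h * b))"
    using s1 s2 by (simp add: algebra_simps)
  then have "\<beta> + (1 - x) * (h * b) / (1 - 2 * (h * b)) \<le> h * b"
    using d by (simp add: field_simps)
  moreover have "\<rho>\<^sup>2 = 1 - x" unfolding x_def by simp
  ultimately show ?thesis unfolding \<beta>_def x_def by simp
qed

lemma powr_step:
  fixes h b b1 :: real
  assumes h: "h > 0" and b: "b > 0" and hb: "2 * h * b < 1" and c: "2 * h * b * b1 \<le> b1 - b"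
  shows "(1 - 2 * (h * b)) powr (- 1 / 2) \<le> exp (h * b1)"
proof -
  define y where "y = 2 * h * b"
  have y: "0 < y" "y < 1" using h b hb by (auto simp: y_def)
  have "ln (1 / (1 - y)) \<le> 1 / (1 - y) - 1" using y by (intro ln_le_minus_one) auto
  then have l: "- ln (1 - y) \<le> y / (1 - y)" using y by (simp add: ln_div field_simps)
  have "y / (1 - y) \<le> 2 * h * b1"
  proof -
    have "b \<le> b1 * (1 - y)" using c by (simp add: y_def algebra_simps)
    then have "2 * h * b \<le> 2 * h * (b1 * (1 - y))" using h by simp
    then show ?thesis using y by (simp add: y_def field_simps)
  qed
  with l have "- ln (1 - y) / 2 \<le> h * b1" by simp
  then have "exp (- ln (1 - y) / 2) \<le> exp (h * b1)" by simp
  moreover have "(1 - y) powr (- 1 / 2) = exp (- ln (1 - y) / 2)"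
    using y by (simp add: powr_def)
  ultimately show ?thesis by (simp add: y_def mult.assoc)
qed

lemma Pm_bound:
  fixes \<kappa> a b b1 h :: real
  assumes k: "\<kappa> > 0" and a: "a > 0" and b: "b > 0" and h: "h > 0"
    and c1: "a * h \<le> b" and c2: "4 * \<kappa> * b\<^sup>2 * h \<le> 2 * b * (\<kappa> - b) - a"
    and c3: "2 * h * b * b1 \<le> b1 - b" and c4: "2 * h * b < 1"
  defines "\<rho> \<equiv> exp (- \<kappa> * h)"
  shows "(\<integral>\<^sup>+w. ennreal (exp (a * h * ((1 - \<rho>\<^sup>2) / (2 * \<kappa>)) * (\<Sum>r<m. (U \<rho> w r)\<^sup>2))) \<partial>Pm m)
       \<le> ennreal (exp (h * b1)) ^ m"
proof (cases m)
  case 0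
  then show ?thesis by (simp add: Pm_def prob_space.emeasure_space_1[OF prob_space_PiM[OF prob_space_stdN]])
next
  case (Suc n)
  define \<beta> where "\<beta> = a * h * ((1 - \<rho>\<^sup>2) / (2 * \<kappa>))"
  have r2: "\<rho>\<^sup>2 = exp (- (2 * \<kappa> * h))"
    unfolding \<rho>_def by (simp add: power2_eq_square exp_add[symmetric])
  have x: "1 - \<rho>\<^sup>2 \<le> 2 * \<kappa> * h" "1 - \<rho>\<^sup>2 > 0"
    using x_bounds[of "2 * \<kappa> * h"] k h unfolding r2 by auto
  have b0: "0 \<le> \<beta>" unfolding \<beta>_def using a h k x by simp
  have bb: "\<beta> \<le> h * b"
  proof -
    have "\<beta> \<le> a * h * ((2 * \<kappa> * h) / (2 * \<kappa>))"
      unfolding \<beta>_def using a h k x by (intro mult_left_mono divide_right_mono) auto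
    also have "\<dots> = h * (a * h)" using k by simp
    also have "\<dots> \<le> h * b" using c1 h by (intro mult_left_mono) auto
    finally show ?thesis .
  qed
  have sup: "\<beta> + \<rho>\<^sup>2 * (h * b) / (1 - 2 * (h * b)) \<le> h * b"
    unfolding \<beta>_def \<rho>_def using sup_cond[OF k a b h c4 c2] by simp
  have "(\<integral>\<^sup>+w. ennreal (exp (\<beta> * (\<Sum>r<m. (U \<rho> w r)\<^sup>2))) \<partial>Pm m)
      = (\<integral>\<^sup>+w. ennreal (exp (\<beta> * (\<Sum>r<n. (U \<rho> w r)\<^sup>2) + \<beta> * (U \<rho> w n)\<^sup>2)) \<partial>PiM {..n} (\<lambda>_. stdN))"
    unfolding Pm_def Suc lessThan_Suc_atMost[symmetric] by (simp add: distrib_left)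
  also have "\<dots> \<le> ennreal ((1 - 2 * (h * b)) powr (- (real n + 1) / 2))"
    by (rule ar_bound[OF b0 _ sup b0 bb]) (use c4 in simp)
  also have "(1 - 2 * (h * b)) powr (- (real n + 1) / 2) = ((1 - 2 * (h * b)) powr (- 1 / 2)) ^ m"
  proof -
    define X where "X = 1 - 2 * (h * b)"
    have X: "X > 0" using c4 by (simp add: X_def)
    have "(X powr (- 1 / 2)) ^ m = (X powr (- 1 / 2)) powr (real m)"
      using X by (simp add: powr_realpow)
    also have "\<dots> = X powr (- 1 / 2 * real m)" by (simp add: powr_powr)
    also have "- 1 / 2 * real m = - (real n + 1) / 2" using Suc by (simp add: field_simps)
    finally show ?thesis unfolding X_def by simp
  qed
  also have "ennreal (((1 - 2 * (h * b)) powr (- 1 / 2)) ^ m) \<le> ennreal (exp (h * b1) ^ m)"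
    by (intro ennreal_leI power_mono powr_step[OF h b c4 c3]) simp
  also have "\<dots> = ennreal (exp (h * b1)) ^ m" by (simp add: ennreal_power)
  finally show ?thesis unfolding \<beta>_def .
qed

lemma abs_le_quad:
  fixes y a :: real assumes a: "a > 0"
  shows "\<bar>y\<bar> \<le> a * y\<^sup>2 + 1 / (4 * a)"
proof -
  have "0 \<le> (2 * a * \<bar>y\<bar> - 1)\<^sup>2" by simp
  then have "4 * a * \<bar>y\<bar> \<le> 4 * a * (a * y\<^sup>2) + 1"
    by (simp add: power2_eq_square algebra_simps)
  then have "4 * a * \<bar>y\<bar> \<le> 4 * a * (a * y\<^sup>2 + 1 / (4 * a))"
    using a by (simp add: distrib_left)
  then show ?thesis using a by simp
qed

lemma norm_sq_vec: "(norm (x :: real ^ 'n))\<^sup>2 = (\<Sum>i\<in>UNIV. (x $ i)\<^sup>2)"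
  unfolding power2_norm_eq_inner inner_vec_def by (simp add: power2_eq_square)

lemma ER_bound:
  fixes B :: "'a \<Rightarrow> real \<Rightarrow> real ^ 'n" and \<kappa> a b b1 h :: real
  assumes OU: "OU_process M \<kappa> B" and k: "\<kappa> > 0" and a: "a > 0" and b: "b > 0" and h: "h > 0"
    and c1: "a * h \<le> b" and c2: "4 * \<kappa> * b\<^sup>2 * h \<le> 2 * b * (\<kappa> - b) - a"
    and c3: "2 * h * b * b1 \<le> b1 - b" and c4: "2 * h * b < 1"
  shows "(\<integral>\<^sup>+\<omega>. ennreal (exp (h * (\<Sum>k<m. norm (B \<omega> (real (m - k) * h))))) \<partial>M)
       \<le> ennreal (exp (real m * h * (1 / (4 * a) + real CARD('n) * b1)))"
proof -
  define c where "c = sqrt (2 * a * h)"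
  have c2h: "c\<^sup>2 / 2 = a * h" unfolding c_def using a h by simp
  let ?Q = "\<lambda>\<omega>. (\<Sum>i\<in>UNIV. \<Sum>k<m. (B \<omega> (real (m - k) * h) $ i)\<^sup>2)"
  have pt: "h * (\<Sum>k<m. norm (B \<omega> (real (m - k) * h))) \<le> real m * h / (4 * a) + a * h * ?Q \<omega>" for \<omega>
  proof -
    have "h * (\<Sum>k<m. norm (B \<omega> (real (m - k) * h))) \<le> h * (\<Sum>k<m. a * (norm (B \<omega> (real (m - k) * h)))\<^sup>2 + 1 / (4 * a))"
      using h abs_le_quad[OF a] by (intro mult_left_mono sum_mono) (auto simp del: abs_norm_cancel, metis abs_norm_cancel)
    also have "\<dots> = real m * h / (4 * a) + a * h * (\<Sum>k<m. (norm (B \<omega> (real (m - k) * h)))\<^sup>2)"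
      by (simp add: sum.distrib sum_distrib_left algebra_simps)
    also have "(\<Sum>k<m. (norm (B \<omega> (real (m - k) * h)))\<^sup>2) = ?Q \<omega>"
      by (simp add: norm_sq_vec sum.swap[of _ UNIV])
    finally show ?thesis .
  qed
  have Qm: "(\<lambda>\<omega>. ennreal (exp (a * h * ?Q \<omega>))) \<in> borel_measurable M"
  proof -
    have "(\<lambda>\<omega>. B \<omega> ((real m - real k) * h) $ i) \<in> borel_measurable M" if "k < m" for i k
      using OU_meas[OF OU, of "(real m - real k) * h" i] h that by simp
    then show ?thesis
      by (intro measurable_compose[OF _ measurable_ennreal] meas_exp borel_measurable_times
          borel_measurable_const borel_measurable_sum borel_measurable_power) auto
  qed
  have "(\<integral>\<^sup>+\<omega>. ennreal (exp (h * (\<Sum>k<m. norm (B \<omega> (real (m - k) * h))))) \<partial>M)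
      \<le> (\<integral>\<^sup>+\<omega>. ennreal (exp (real m * h / (4 * a))) * ennreal (exp (a * h * ?Q \<omega>)) \<partial>M)"
  proof (intro nn_integral_mono)
    fix \<omega>
    have "exp (h * (\<Sum>k<m. norm (B \<omega> (real (m - k) * h)))) \<le> exp (real m * h / (4 * a) + a * h * ?Q \<omega>)"
      using pt[of \<omega>] by (simp only: exp_le_cancel_iff)
    then have "exp (h * (\<Sum>k<m. norm (B \<omega> (real (m - k) * h)))) \<le> exp (real m * h / (4 * a)) * exp (a * h * ?Q \<omega>)"
      by (simp only: exp_add)
    then show "ennreal (exp (h * (\<Sum>k<m. norm (B \<omega> (real (m - k) * h))))) \<le> ennreal (exp (real m * h / (4 * a))) * ennreal (exp (a * h * ?Q \<omega>))"
      by (subst ennreal_mult[symmetric]) (auto intro: ennreal_leI)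
  qed
  also have "\<dots> = ennreal (exp (real m * h / (4 * a))) * (\<integral>\<^sup>+\<omega>. ennreal (exp (a * h * ?Q \<omega>)) \<partial>M)"
    by (rule nn_integral_cmult[OF Qm])
  also have "(\<integral>\<^sup>+\<omega>. ennreal (exp (a * h * ?Q \<omega>)) \<partial>M)
      = (\<integral>\<^sup>+w. ennreal (exp (a * h * ((1 - (exp (- \<kappa> * h))\<^sup>2) / (2 * \<kappa>)) * (\<Sum>r<m. (U (exp (- \<kappa> * h)) w r)\<^sup>2))) \<partial>Pm m) ^ CARD('n)"
    using E_quad[OF OU k h, of c m] unfolding c2h .
  also have "\<dots> \<le> (ennreal (exp (h * b1)) ^ m) ^ CARD('n)"
    by (intro power_mono Pm_bound[OF k a b h c1 c2 c3 c4]) simp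
  also have "ennreal (exp (real m * h / (4 * a))) * (ennreal (exp (h * b1)) ^ m) ^ CARD('n)
      = ennreal (exp (real m * h * (1 / (4 * a) + real CARD('n) * b1)))"
  proof -
    have "(ennreal (exp (h * b1)) ^ m) ^ CARD('n) = ennreal (exp (real CARD('n) * (real m * (h * b1))))"
    proof -
      have "(ennreal (exp (h * b1)) ^ m) ^ CARD('n) = ennreal (exp (h * b1) ^ (m * CARD('n)))"
        by (simp add: ennreal_power power_mult)
      also have "exp (h * b1) ^ (m * CARD('n)) = exp (real (m * CARD('n)) * (h * b1))"
        by (rule exp_of_nat_mult[symmetric])
      also have "real (m * CARD('n)) * (h * b1) = real CARD('n) * (real m * (h * b1))" by simp
      finally show ?thesis .
    qed
    then show ?thesis
      by (simp add: ennreal_mult[symmetric] exp_add[symmetric] algebra_simps del: ennreal_mult')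
  qed
  finally show ?thesis by (simp add: mult_left_mono)
qed

lemma split_int:
  fixes f :: "real \<Rightarrow> real"
  assumes f: "continuous_on {0..t} f" and h: "h > 0"
  shows "real n * h \<le> t \<Longrightarrow> integral {0..real n * h} f = (\<Sum>j<n. integral {real j * h..real (Suc j) * h} f)"
proof (induction n)
  case 0 then show ?case by simp
next
  case (Suc n)
  have le: "real n * h \<le> real (Suc n) * h" using h by simp
  have fint: "f integrable_on {0..real (Suc n) * h}"
    by (rule integrable_continuous_interval, rule continuous_on_subset[OF f]) (use Suc.prems in auto)
  have "integral {0..real n * h} f + integral {real n * h..real (Suc n) * h} f = integral {0..real (Suc n) * h} f"
    by (rule Henstock_Kurzweil_Integration.integral_combine[OF _ le fint]) (use h in simp)
  moreover have "integral {0..real n * h} f = (\<Sum>j<n. integral {real j * h..real (Suc j) * h} f)"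
    using Suc.IH Suc.prems le by linarith
  ultimately show ?case by simp
qed

lemma riemann_right:
  fixes f :: "real \<Rightarrow> real"
  assumes f: "continuous_on {0..t} f" and t: "t > 0"
  shows "(\<lambda>m. (t / real m) * (\<Sum>k<m. f (real (m - k) * (t / real m)))) \<longlonglongrightarrow> integral {0..t} f"
proof (rule LIMSEQ_I)
  fix r :: real assume r: "r > 0"
  define \<epsilon> where "\<epsilon> = r / (2 * t)"
  have e: "\<epsilon> > 0" using r t by (simp add: \<epsilon>_def)
  have uc: "uniformly_continuous_on {0..t} f"
    by (rule compact_uniformly_continuous[OF f]) simp
  obtain d where d: "d > 0" and dd: "\<And>x y. x \<in> {0..t} \<Longrightarrow> y \<in> {0..t} \<Longrightarrow> dist y x < d \<Longrightarrow> dist (f y) (f x) < \<epsilon>"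
    using uc e unfolding uniformly_continuous_on_def by metis
  obtain N :: nat where N: "t / d < real N" using reals_Archimedean2 by blast
  show "\<exists>no. \<forall>m\<ge>no. norm ((t / real m) * (\<Sum>k<m. f (real (m - k) * (t / real m))) - integral {0..t} f) < r"
  proof (intro exI allI impI)
    fix m assume mN: "Suc N \<le> m"
    define h where "h = t / real m"
    have m0: "real m > 0" using mN by simp
    have h0: "h > 0" using t m0 by (simp add: h_def)
    have hd: "h < d"
    proof -
      have "t / d < real m" using N mN by linarith
      then have "t < d * real m" using d by (simp add: field_simps)
      then show ?thesis unfolding h_def using m0 by (simp add: field_simps)
    qed
    have mh: "real m * h = t" unfolding h_def using m0 by simp
    have R: "(\<Sum>k<m. f (real (m - k) * h)) = (\<Sum>j<m. f (real (Suc j) * h))"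
    proof -
      have "(\<Sum>j<m. f (real (Suc j) * h)) = (\<Sum>j\<in>{0..<m}. f (real (Suc j) * h))" by (simp add: atLeast0LessThan)
      also have "\<dots> = (\<Sum>i\<in>{0..<m}. f (real (Suc (m + 0 - Suc i)) * h))"
        by (rule sum.atLeastLessThan_rev)
      also have "\<dots> = (\<Sum>k<m. f (real (m - k) * h))"
        by (intro sum.cong) (auto simp: atLeast0LessThan Suc_diff_Suc)
      finally show ?thesis by simp
    qed
    have I: "integral {0..t} f = (\<Sum>j<m. integral {real j * h..real (Suc j) * h} f)"
      using split_int[OF f h0, of m] mh by simp
    have bnd: "norm (integral {real j * h..real (Suc j) * h} f - h * f (real (Suc j) * h)) \<le> \<epsilon> * h" if j: "j < m" for j
    proof -
      have sub: "{real j * h..real (Suc j) * h} \<subseteq> {0..t}"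
      proof -
        have "real (Suc j) * h \<le> real m * h" using j h0 by (intro mult_right_mono) auto
        then show ?thesis using mh h0 by auto
      qed
      have cj: "continuous_on {real j * h..real (Suc j) * h} f" by (rule continuous_on_subset[OF f sub])
      have "integral {real j * h..real (Suc j) * h} f - h * f (real (Suc j) * h)
          = integral {real j * h..real (Suc j) * h} (\<lambda>x. f x - f (real (Suc j) * h))"
      proof -
        have fi: "f integrable_on {real j * h..real (Suc j) * h}" by (rule integrable_continuous_interval[OF cj])
        have ci: "(\<lambda>x. f (real (Suc j) * h)) integrable_on {real j * h..real (Suc j) * h}"
          by (intro integrable_continuous_interval continuous_on_const)
        have "integral {real j * h..real (Suc j) * h} (\<lambda>x. f x - f (real (Suc j) * h))
            = integral {real j * h..real (Suc j) * h} f - integral {real j * h..real (Suc j) * h} (\<lambda>x. f (real (Suc j) * h))"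
          by (rule integral_diff[OF fi ci])
        also have "integral {real j * h..real (Suc j) * h} (\<lambda>x. f (real (Suc j) * h)) = h * f (real (Suc j) * h)"
          using h0 by (simp add: algebra_simps)
        finally show ?thesis by simp
      qed
      also have "norm \<dots> \<le> \<epsilon> * (real (Suc j) * h - real j * h)"
      proof (rule integral_bound)
        show "real j * h \<le> real (Suc j) * h" using h0 by simp
        show "continuous_on {real j * h..real (Suc j) * h} (\<lambda>x. f x - f (real (Suc j) * h))"
          by (intro continuous_intros cj)
        fix x assume x: "x \<in> {real j * h..real (Suc j) * h}"
        have "dist x (real (Suc j) * h) < d"
          using x hd by (auto simp: dist_real_def algebra_simps)
        moreover have "0 \<le> x"
          using x h0 by (meson atLeastAtMost_iff mult_nonneg_nonneg of_nat_0_le_iff order_trans less_imp_le)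
        ultimately have "dist (f x) (f (real (Suc j) * h)) < \<epsilon>"
          using dd[of "real (Suc j) * h" x] x sub h0 by auto
        then show "norm (f x - f (real (Suc j) * h)) \<le> \<epsilon>" by (simp add: dist_real_def)
      qed
      also have "real (Suc j) * h - real j * h = h" by (simp add: algebra_simps)
      finally show ?thesis .
    qed
    have "norm ((t / real m) * (\<Sum>k<m. f (real (m - k) * (t / real m))) - integral {0..t} f)
        = norm (\<Sum>j<m. (h * f (real (Suc j) * h) - integral {real j * h..real (Suc j) * h} f))"
      unfolding h_def[symmetric] R I by (simp add: sum_subtractf sum_distrib_left)
    also have "\<dots> \<le> (\<Sum>j<m. norm (h * f (real (Suc j) * h) - integral {real j * h..real (Suc j) * h} f))"
      by (rule norm_sum)
    also have "\<dots> \<le> (\<Sum>j<m. \<epsilon> * h)"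
    proof (intro sum_mono)
      fix j assume "j \<in> {..<m}"
      then show "norm (h * f (real (Suc j) * h) - integral {real j * h..real (Suc j) * h} f) \<le> \<epsilon> * h"
        using bnd[of j] by (simp only: norm_minus_commute lessThan_iff)
    qed
    also have "\<dots> = \<epsilon> * t" using mh by (simp add: mult.commute mult.left_commute)
    also have "\<dots> < r" using r t by (simp add: \<epsilon>_def)
    finally show "norm ((t / real m) * (\<Sum>k<m. f (real (m - k) * (t / real m))) - integral {0..t} f) < r" .
  qed
qed

lemma params:
  fixes \<kappa> :: real and L :: nat
  assumes k: "\<kappa> > 0" and L: "L \<ge> 1"
  shows "\<exists>a b b1. a > 0 \<and> b > 0 \<and> b < b1 \<and> a < 2 * b * (\<kappa> - b) \<and>
           1 / (4 * a) + real L * b1 \<le> 1 / (2 * \<kappa>\<^sup>2) + real L / 2 * \<kappa>"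
proof -
  define d where "d = min (\<kappa> / 4) (\<kappa> ^ 4 / 12)"
  have d0: "d > 0" using k by (simp add: d_def)
  have d1: "d \<le> \<kappa> / 4" and d2: "d \<le> \<kappa> ^ 4 / 12" by (auto simp: d_def)
  define a where "a = \<kappa>\<^sup>2 / 2 - 3 * d\<^sup>2"
  define b where "b = \<kappa> / 2 - d"
  define b1 where "b1 = \<kappa> / 2 - d / 2"
  have dsq: "d\<^sup>2 \<le> \<kappa>\<^sup>2 / 16"
  proof -
    have "d\<^sup>2 \<le> (\<kappa> / 4)\<^sup>2" using d0 d1 by (intro power_mono) auto
    then show ?thesis by (simp add: power_divide)
  qed
  have aq: "a \<ge> \<kappa>\<^sup>2 / 4" unfolding a_def using dsq zero_le_power2[of d] by linarith
  have "\<kappa>\<^sup>2 / 4 > 0" using k by simp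
  then have a0: "a > 0" using aq by linarith
  have b0: "b > 0" unfolding b_def using d1 k by simp
  have bb1: "b < b1" unfolding b_def b1_def using d0 by simp
  have ab: "a < 2 * b * (\<kappa> - b)"
  proof -
    have "2 * b * (\<kappa> - b) = \<kappa>\<^sup>2 / 2 - 2 * d\<^sup>2" unfolding b_def by (simp add: power2_eq_square algebra_simps)
    then show ?thesis unfolding a_def using d0 by simp
  qed
  have F: "1 / (4 * a) - 1 / (2 * \<kappa>\<^sup>2) \<le> d / 2"
  proof -
    have k2: "\<kappa>\<^sup>2 > 0" using k by simp
    have "1 / (4 * a) - 1 / (2 * \<kappa>\<^sup>2) = (2 * \<kappa>\<^sup>2 - 4 * a) / (8 * a * \<kappa>\<^sup>2)"
      using a0 k2 by (simp add: field_simps)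
    also have "2 * \<kappa>\<^sup>2 - 4 * a = 12 * d\<^sup>2" unfolding a_def by simp
    also have "12 * d\<^sup>2 / (8 * a * \<kappa>\<^sup>2) \<le> 12 * d\<^sup>2 / (8 * (\<kappa>\<^sup>2 / 4) * \<kappa>\<^sup>2)"
    proof -
      have le: "8 * (\<kappa>\<^sup>2 / 4) * \<kappa>\<^sup>2 \<le> 8 * a * \<kappa>\<^sup>2" using aq k2 by simp
      have p2: "0 < 8 * (\<kappa>\<^sup>2 / 4) * \<kappa>\<^sup>2" using k2 by simp
      have p1: "0 < 8 * a * \<kappa>\<^sup>2" using a0 k2 by simp
      show ?thesis by (rule divide_left_mono[OF le _ mult_pos_pos[OF p1 p2]]) simp
    qed
    also have "\<dots> = 6 * d\<^sup>2 / \<kappa> ^ 4" using k2 by (simp add: field_simps power2_eq_square power4_eq_xxxx)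
    also have "\<dots> \<le> d / 2"
    proof -
      have "6 * d\<^sup>2 = (6 * d) * d" by (simp add: power2_eq_square)
      also have "\<dots> \<le> (\<kappa> ^ 4 / 2) * d" using d2 d0 by (intro mult_right_mono) auto
      finally have A: "6 * d\<^sup>2 \<le> (\<kappa> ^ 4 / 2) * d" .
      have eq: "(\<kappa> ^ 4 / 2) * d = d / 2 * \<kappa> ^ 4" by simp
      from A have B: "6 * d\<^sup>2 \<le> d / 2 * \<kappa> ^ 4" unfolding eq .
      have k4: "\<kappa> ^ 4 > 0" using k by simp
      show ?thesis unfolding pos_divide_le_eq[OF k4] by (rule B)
    qed
    finally show ?thesis .
  qed
  have "1 / (4 * a) + real L * b1 \<le> 1 / (2 * \<kappa>\<^sup>2) + real L / 2 * \<kappa>"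
  proof -
    have "real L * b1 = real L / 2 * \<kappa> - real L * (d / 2)" unfolding b1_def by (simp add: algebra_simps)
    moreover have "d / 2 \<le> real L * (d / 2)" using L d0 by simp
    ultimately show ?thesis using F by linarith
  qed
  then show ?thesis using a0 b0 bb1 ab by blast
qed

lemma ev_small:
  fixes K C t :: real assumes "C > 0"
  shows "eventually (\<lambda>m. K * (t / real m) < C) sequentially"
proof -
  have "(\<lambda>m. K * (t / real m)) \<longlonglongrightarrow> 0"
    by (rule tendsto_mult_right_zero[OF lim_const_over_n])
  from order_tendstoD(2)[OF this assms] show ?thesis .
qed

lemma tail_bound:
  fixes B :: "'a \<Rightarrow> real \<Rightarrow> real ^ 'n" and \<kappa> N t a b b1 :: real
  assumes OU: "OU_process M \<kappa> B" and k: "\<kappa> > 0" and t: "t > 0"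
    and a: "a > 0" and b: "b > 0" and bb1: "b < b1" and ab: "a < 2 * b * (\<kappa> - b)"
    and A: "{\<omega> \<in> space M. (1 / t) * integral {0..t} (\<lambda>s. norm (B \<omega> s)) > N} \<in> sets M"
  shows "emeasure M {\<omega> \<in> space M. (1 / t) * integral {0..t} (\<lambda>s. norm (B \<omega> s)) > N}
     \<le> ennreal (exp (t * (1 / (4 * a) + real CARD('n) * b1) - N * t))"
proof -
  let ?A = "{\<omega> \<in> space M. (1 / t) * integral {0..t} (\<lambda>s. norm (B \<omega> s)) > N}"
  define F where "F = 1 / (4 * a) + real CARD('n) * b1"
  define R where "R = (\<lambda>m \<omega>. (t / real m) * (\<Sum>k<m. norm (B \<omega> (real (m - k) * (t / real m)))))"
  define I where "I = (\<lambda>\<omega>. integral {0..t} (\<lambda>s. norm (B \<omega> s)))"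
  define u where "u = (\<lambda>m \<omega>. ennreal (exp (- N * t)) * ennreal (exp (R m \<omega>)))"
  have conv: "(\<lambda>m. R m \<omega>) \<longlonglongrightarrow> I \<omega>" if w: "\<omega> \<in> space M" for \<omega>
  proof -
    have "continuous_on {0..} (B \<omega>)" using OU w unfolding OU_process_def by blast
    then have "continuous_on {0..t} (B \<omega>)" by (rule continuous_on_subset) auto
    then have "continuous_on {0..t} (\<lambda>s. norm (B \<omega> s))" by (intro continuous_on_norm)
    from riemann_right[OF this t] show ?thesis unfolding R_def I_def .
  qed
  have liminf_u: "liminf (\<lambda>m. u m \<omega>) = ennreal (exp (- N * t)) * ennreal (exp (I \<omega>))" if w: "\<omega> \<in> space M" for \<omega>
  proof (rule lim_imp_Liminf)
    show "((\<lambda>m. u m \<omega>) \<longlongrightarrow> ennreal (exp (- N * t)) * ennreal (exp (I \<omega>))) sequentially"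
      unfolding u_def by (intro tendsto_intros conv[OF w]) auto
  qed simp
  have ind: "indicator ?A \<omega> \<le> ennreal (exp (- N * t)) * ennreal (exp (I \<omega>))" for \<omega>
  proof (cases "\<omega> \<in> ?A")
    case True
    then have "(1 / t) * I \<omega> > N" unfolding I_def by simp
    then have "I \<omega> > N * t" using t by (simp add: field_simps)
    then have "1 \<le> exp (- N * t) * exp (I \<omega>)" by (simp add: exp_add[symmetric])
    then have "1 \<le> ennreal (exp (- N * t) * exp (I \<omega>))" by (simp add: ennreal_1[symmetric] del: ennreal_1)
    then show ?thesis using True by (simp add: ennreal_mult del: ennreal_mult')
  qed simp
  have Rm: "(\<lambda>\<omega>. R m \<omega>) \<in> borel_measurable M" for m
  proof -
    have "(\<lambda>\<omega>. norm (B \<omega> (real (m - k) * (t / real m)))) \<in> borel_measurable M" for k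
    proof -
      have "(\<lambda>\<omega>. B \<omega> (real (m - k) * (t / real m)) $ i) \<in> borel_measurable M" for i
        using OU_meas[OF OU, of "real (m - k) * (t / real m)" i] t by simp
      then have "(\<lambda>\<omega>. sqrt (\<Sum>i\<in>UNIV. (B \<omega> (real (m - k) * (t / real m)) $ i)\<^sup>2)) \<in> borel_measurable M"
        by (intro measurable_compose[OF _ borel_measurable_sqrt] borel_measurable_sum borel_measurable_power)
      moreover have "sqrt (\<Sum>i\<in>UNIV. (x $ i)\<^sup>2) = norm x" for x :: "real ^ 'n"
        unfolding norm_sq_vec[symmetric] by simp
      ultimately show ?thesis by simp
    qed
    then show ?thesis unfolding R_def
      by (intro borel_measurable_times borel_measurable_const borel_measurable_sum)
  qed
  have eRm: "(\<lambda>\<omega>. ennreal (exp (R m \<omega>))) \<in> borel_measurable M" for m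
    by (rule measurable_compose[OF meas_exp[OF Rm] measurable_ennreal])
  have um: "u m \<in> borel_measurable M" for m
    unfolding u_def by (intro borel_measurable_times_ennreal borel_measurable_const eRm)
  have "emeasure M ?A = (\<integral>\<^sup>+\<omega>. indicator ?A \<omega> \<partial>M)" using A by simp
  also have "\<dots> \<le> (\<integral>\<^sup>+\<omega>. liminf (\<lambda>m. u m \<omega>) \<partial>M)"
  proof (intro nn_integral_mono)
    fix \<omega> assume w: "\<omega> \<in> space M"
    show "indicator ?A \<omega> \<le> liminf (\<lambda>m. u m \<omega>)" unfolding liminf_u[OF w] by (rule ind)
  qed
  also have "\<dots> \<le> liminf (\<lambda>m. integral\<^sup>N M (u m))"
    by (rule nn_integral_liminf[OF um])
  also have "\<dots> \<le> ennreal (exp (t * F - N * t))"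
  proof -
    have ev: "eventually (\<lambda>m. integral\<^sup>N M (u m) \<le> ennreal (exp (t * F - N * t))) sequentially"
    proof -
      have e1: "eventually (\<lambda>m. a * (t / real m) < b) sequentially" by (rule ev_small) (use b in simp)
      have e2: "eventually (\<lambda>m. (4 * \<kappa> * b\<^sup>2) * (t / real m) < 2 * b * (\<kappa> - b) - a) sequentially"
        by (rule ev_small) (use ab in simp)
      have e3: "eventually (\<lambda>m. (2 * b * b1) * (t / real m) < b1 - b) sequentially"
        by (rule ev_small) (use bb1 in simp)
      have e4: "eventually (\<lambda>m. (2 * b) * (t / real m) < 1) sequentially" by (rule ev_small) simp
      have e5: "eventually (\<lambda>m. m \<ge> 1) sequentially" by (rule eventually_ge_at_top)
      show ?thesis using e1 e2 e3 e4 e5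
      proof eventually_elim
        case (elim m)
        define h where "h = t / real m"
        have h0: "h > 0" using elim t by (simp add: h_def)
        have mh: "real m * h = t" using elim by (simp add: h_def)
        have "integral\<^sup>N M (u m) = ennreal (exp (- N * t)) * (\<integral>\<^sup>+\<omega>. ennreal (exp (R m \<omega>)) \<partial>M)"
          unfolding u_def by (rule nn_integral_cmult[OF eRm])
        also have "\<dots> = ennreal (exp (- N * t)) * (\<integral>\<^sup>+\<omega>. ennreal (exp (h * (\<Sum>k<m. norm (B \<omega> (real (m - k) * h))))) \<partial>M)"
          unfolding R_def h_def ..
        also have "\<dots> \<le> ennreal (exp (- N * t)) * ennreal (exp (real m * h * (1 / (4 * a) + real CARD('n) * b1)))"
        proof (intro mult_left_mono ER_bound[OF OU k a b h0])
          show "a * h \<le> b" using elim(1) by (simp add: h_def)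
          show "4 * \<kappa> * b\<^sup>2 * h \<le> 2 * b * (\<kappa> - b) - a" using elim(2) by (simp add: h_def)
          show "2 * h * b * b1 \<le> b1 - b" using elim(3) by (simp add: h_def mult_ac)
          show "2 * h * b < 1" using elim(4) by (simp add: h_def mult_ac)
        qed simp
        also have "\<dots> = ennreal (exp (t * F - N * t))"
          unfolding mh F_def
          by (simp add: ennreal_mult[symmetric] exp_add[symmetric] algebra_simps del: ennreal_mult')
        finally show ?case .
      qed
    qed
    have "liminf (\<lambda>m. integral\<^sup>N M (u m)) \<le> limsup (\<lambda>m. integral\<^sup>N M (u m))"
      by (rule Liminf_le_Limsup) simp
    also have "\<dots> \<le> ennreal (exp (t * F - N * t))"
      by (rule Limsup_bounded[OF ev])
    finally show ?thesis .
  qed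
  finally show ?thesis unfolding F_def .
qed

theorem mainTheorem6:
  fixes M :: "'a measure" and \<kappa> N :: real and B :: "'a \<Rightarrow> real \<Rightarrow> real ^ 'n"
  assumes "\<kappa> > 0" and "N > 0" and "OU_process M \<kappa> B"
  shows "Limsup at_top (\<lambda>t::real. elog (measure M {\<omega> \<in> space M.
            (1 / t) * integral {0..t} (\<lambda>s. norm (B \<omega> s)) > N}) / ereal t)
         \<le> ereal (- N + 1 / (2 * \<kappa>\<^sup>2) + real CARD('n) / 2 * \<kappa>)"
proof -
  note k = assms(1) and OU = assms(3)
  have L: "CARD('n) \<ge> 1" by (simp add: Suc_leI)
  obtain a b b1 where a: "a > 0" and b: "b > 0" and bb1: "b < b1" and ab: "a < 2 * b * (\<kappa> - b)"
    and Fle: "1 / (4 * a) + real CARD('n) * b1 \<le> 1 / (2 * \<kappa>\<^sup>2) + real CARD('n) / 2 * \<kappa>"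
    using params[OF k L] by blast
  define F where "F = 1 / (4 * a) + real CARD('n) * b1"
  interpret PM: prob_space M by (rule OU_prob[OF OU])
  show ?thesis
  proof (rule Limsup_bounded)
    show "eventually (\<lambda>t::real. elog (measure M {\<omega> \<in> space M.
            (1 / t) * integral {0..t} (\<lambda>s. norm (B \<omega> s)) > N}) / ereal t
         \<le> ereal (- N + 1 / (2 * \<kappa>\<^sup>2) + real CARD('n) / 2 * \<kappa>)) at_top"
      using eventually_gt_at_top[of "0::real"]
    proof eventually_elim
      case (elim t)
      let ?A = "{\<omega> \<in> space M. (1 / t) * integral {0..t} (\<lambda>s. norm (B \<omega> s)) > N}"
      show ?case
      proof (cases "?A \<in> sets M \<and> measure M ?A > 0")
        case False
        then have "measure M ?A \<le> 0"
          using measure_notin_sets[of ?A M] by force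
        then show ?thesis using elim by (simp add: elog_def)
      next
        case True
        then have As: "?A \<in> sets M" and p: "measure M ?A > 0" by auto
        have "ennreal (measure M ?A) = emeasure M ?A" using PM.emeasure_eq_measure by simp
        also have "\<dots> \<le> ennreal (exp (t * F - N * t))"
          unfolding F_def by (rule tail_bound[OF OU k elim a b bb1 ab As])
        finally have "measure M ?A \<le> exp (t * F - N * t)" by (simp add: ennreal_le_iff2)
        then have "ln (measure M ?A) \<le> t * F - N * t" using p ln_le_cancel_iff[of "measure M ?A" "exp (t * F - N * t)"] by simp
        then have "ln (measure M ?A) \<le> (F - N) * t" by (simp add: algebra_simps)
        then have "ln (measure M ?A) / t \<le> F - N" by (subst pos_divide_le_eq[OF elim])
        also have "F - N \<le> - N + 1 / (2 * \<kappa>\<^sup>2) + real CARD('n) / 2 * \<kappa>" using Fle unfolding F_def by simp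
        finally show ?thesis using p elim by (simp add: elog_def)
      qed
    qed
  qed
qed

end
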